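(* Let $R,S$ be rings with identity and ring homomorphisms $\rho:R\to S$, $\iota:S\to R$ with $\rho\iota=\mathrm{id}_S$. Let $M\alpha L$ be a retractive pair and $n\ge 0$. If $M$ is of type $FP_n$ as a left $R$-module, then there exist retractive pairs $P_i\beta_iF_i$ ($0\le i\le n$), with each $P_i$ a finitely generated free left $R$-module and each $F_i$ a finitely generated free left $S$-module, and mappings of retractive pairs $(\partial_0,\delta_0):P_0\beta_0F_0\to M\alpha L$ and $(\partial_i,\delta_i):P_i\beta_iF_i\to P_{i-1}\beta_{i-1}F_{i-1}$ ($1\le i\le n$), such that $\mathrm{Im}(\partial_0,\delta_0)=M\alpha L$ and $\mathrm{Im}(\partial_{i+1},\delta_{i+1})=\mathrm{Ker}(\partial_i,\delta_i)$ for $0\le i<n$. In particular $0\leftarrow L\xleftarrow{\delta_0}F_0\xleftarrow{\delta_1}F_1\leftarrow\cdots\xleftarrow{\delta_n}F_n$ is a partial free resolution of $L$, so $L$ is of type $FP_n$ as a left $S$-module.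
   Context: A module is of type $FP_n$ if there is an exact sequence $0\leftarrow M\leftarrow P_0\leftarrow\cdots\leftarrow P_n$ with $P_0,\dots,P_n$ finitely generated free modules. A (left) retractive pair $M\alpha L$ consists of a left $R$-module $M$, a left $S$-module $L$, and abelian group homomorphisms $\alpha^+:M\to L$, $\alpha^-:L\to M$ with $\alpha^+\alpha^-=\mathrm{id}_L$, where $\alpha^+$ is an $R$-module homomorphism (with $L$ an $R$-module via $\rho$) and $\alpha^-$ is an $S$-module homomorphism (with $M$ an $S$-module via $\iota$). A mapping $(\phi,\psi):M\alpha L\to M'\beta L'$ consists of an $R$-module homomorphism $\phi:M\to M'$ and an $S$-module homomorphism $\psi:L\to L'$ with $\beta^+\phi=\psi\alpha^+$ and $\phi\alpha^-=\beta^-\psi$. Then $\alpha^\pm$ restrict to give the retractive pair $\mathrm{Ker}(\phi,\psi)$ consisting of $\mathrm{Ker}\phi$, $\mathrm{Ker}\psi$ with maps $\alpha^+,\alpha^-$, and $\beta^\pm$ restrict to give the retractive pair $\mathrm{Im}(\phi,\psi)$ consisting of $\mathrm{Im}\phi$, $\mathrm{Im}\psi$ with maps $\beta^+,\beta^-$. Equality of retractive pairs here means equality of both underlying modules (as subpairs). *)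

theory Defs
  imports "HOL-Algebra.Algebra"
begin

text \<open>Left modules over a not necessarily commutative ring with identity
  (the HOL-Algebra locale module requires a commutative ring).\<close>

locale left_module = R?: ring R + M?: abelian_group M
  for R :: "('a, 'c) ring_scheme" (structure) and M :: "('a, 'b, 'd) module_scheme" (structure) +
  assumes smult_closed:
      "\<lbrakk> a \<in> carrier R; x \<in> carrier M \<rbrakk> \<Longrightarrow> a \<odot>\<^bsub>M\<^esub> x \<in> carrier M"
    and smult_l_distr:
      "\<lbrakk> a \<in> carrier R; b \<in> carrier R; x \<in> carrier M \<rbrakk> \<Longrightarrow>
      (a \<oplus> b) \<odot>\<^bsub>M\<^esub> x = a \<odot>\<^bsub>M\<^esub> x \<oplus>\<^bsub>M\<^esub> b \<odot>\<^bsub>M\<^esub> x"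
    and smult_r_distr:
      "\<lbrakk> a \<in> carrier R; x \<in> carrier M; y \<in> carrier M \<rbrakk> \<Longrightarrow>
      a \<odot>\<^bsub>M\<^esub> (x \<oplus>\<^bsub>M\<^esub> y) = a \<odot>\<^bsub>M\<^esub> x \<oplus>\<^bsub>M\<^esub> a \<odot>\<^bsub>M\<^esub> y"
    and smult_assoc1:
      "\<lbrakk> a \<in> carrier R; b \<in> carrier R; x \<in> carrier M \<rbrakk> \<Longrightarrow>
      (a \<otimes> b) \<odot>\<^bsub>M\<^esub> x = a \<odot>\<^bsub>M\<^esub> (b \<odot>\<^bsub>M\<^esub> x)"
    and smult_one:
      "x \<in> carrier M \<Longrightarrow> \<one> \<odot>\<^bsub>M\<^esub> x = x"

definition lmod_hom ::
  "('a, 'c) ring_scheme \<Rightarrow> ('a, 'b, 'd) module_scheme \<Rightarrow> ('a, 'e, 'f) module_scheme \<Rightarrow> ('b \<Rightarrow> 'e) set"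
  where "lmod_hom R M N =
    {h. h \<in> carrier M \<rightarrow> carrier N \<and>
        (\<forall>x\<in>carrier M. \<forall>y\<in>carrier M. h (x \<oplus>\<^bsub>M\<^esub> y) = h x \<oplus>\<^bsub>N\<^esub> h y) \<and>
        (\<forall>a\<in>carrier R. \<forall>x\<in>carrier M. h (a \<odot>\<^bsub>M\<^esub> x) = a \<odot>\<^bsub>N\<^esub> h x)}"

definition restrict_scalars ::
  "('a \<Rightarrow> 's) \<Rightarrow> ('s, 'b) module \<Rightarrow> ('a, 'b) module"
  where "restrict_scalars f N =
    \<lparr> carrier = carrier N, monoid.mult = monoid.mult N, one = one N,
      ring.zero = ring.zero N, ring.add = ring.add N, smult = (\<lambda>a x. f a \<odot>\<^bsub>N\<^esub> x) \<rparr>"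

definition mod_kernel :: "('a, 'b, 'd) module_scheme \<Rightarrow> ('s, 'e, 'f) module_scheme \<Rightarrow> ('b \<Rightarrow> 'e) \<Rightarrow> 'b set"
  where "mod_kernel M N h = {x \<in> carrier M. h x = \<zero>\<^bsub>N\<^esub>}"

definition fg_free :: "('a, 'c) ring_scheme \<Rightarrow> ('a, 'b) module \<Rightarrow> bool"
  where "fg_free R P \<longleftrightarrow> left_module R P \<and>
    (\<exists>B. finite B \<and> B \<subseteq> carrier P \<and>
       (\<forall>x\<in>carrier P. \<exists>!c. c \<in> B \<rightarrow>\<^sub>E carrier R \<and>
            x = finsum P (\<lambda>b. c b \<odot>\<^bsub>P\<^esub> b) B))"

text \<open>The free modules are taken with carrier type nat => 'a (every f.g. free module is
  isomorphic to one of this type, namely R^k).\<close>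
definition FP :: "nat \<Rightarrow> ('a, 'c) ring_scheme \<Rightarrow> ('a, 'b) module \<Rightarrow> bool"
  where "FP n R M \<longleftrightarrow> left_module R M \<and>
    (\<exists>(P :: nat \<Rightarrow> ('a, nat \<Rightarrow> 'a) module) d0 d.
       (\<forall>i\<le>n. fg_free R (P i)) \<and>
       d0 \<in> lmod_hom R (P 0) M \<and> d0 ` carrier (P 0) = carrier M \<and>
       (\<forall>i\<in>{1..n}. d i \<in> lmod_hom R (P i) (P (i - 1))) \<and>
       (n \<ge> 1 \<longrightarrow> d 1 ` carrier (P 1) = mod_kernel (P 0) M d0) \<and>
       (\<forall>i. 1 \<le> i \<and> i < n \<longrightarrow> d (Suc i) ` carrier (P (Suc i)) = mod_kernel (P i) (P (i - 1)) (d i)))"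

text \<open>Retractive pair M alpha L (R-module M, S-module L, alpha+ : M -> L, alpha- : L -> M).\<close>
definition retractive_pair ::
  "('a, 'c) ring_scheme \<Rightarrow> ('s, 'e) ring_scheme \<Rightarrow> ('a \<Rightarrow> 's) \<Rightarrow> ('s \<Rightarrow> 'a) \<Rightarrow>
   ('a, 'm) module \<Rightarrow> ('s, 'l) module \<Rightarrow> ('m \<Rightarrow> 'l) \<Rightarrow> ('l \<Rightarrow> 'm) \<Rightarrow> bool"
  where "retractive_pair R S \<rho> \<iota> M L ap am \<longleftrightarrow>
    left_module R M \<and> left_module S L \<and>
    ap \<in> lmod_hom R M (restrict_scalars \<rho> L) \<and>
    am \<in> lmod_hom S L (restrict_scalars \<iota> M) \<and>
    (\<forall>y\<in>carrier L. ap (am y) = y)"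

definition rp_mapping ::
  "('a, 'c) ring_scheme \<Rightarrow> ('s, 'e) ring_scheme \<Rightarrow>
   ('a, 'm) module \<Rightarrow> ('s, 'l) module \<Rightarrow> ('m \<Rightarrow> 'l) \<Rightarrow> ('l \<Rightarrow> 'm) \<Rightarrow>
   ('a, 'm2) module \<Rightarrow> ('s, 'l2) module \<Rightarrow> ('m2 \<Rightarrow> 'l2) \<Rightarrow> ('l2 \<Rightarrow> 'm2) \<Rightarrow>
   ('m \<Rightarrow> 'm2) \<Rightarrow> ('l \<Rightarrow> 'l2) \<Rightarrow> bool"
  where "rp_mapping R S M L ap am M' L' bp bm \<phi> \<psi> \<longleftrightarrow>
    \<phi> \<in> lmod_hom R M M' \<and> \<psi> \<in> lmod_hom S L L' \<and>
    (\<forall>x\<in>carrier M. bp (\<phi> x) = \<psi> (ap x)) \<and>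
    (\<forall>y\<in>carrier L. \<phi> (am y) = bm (\<psi> y))"

end

theory Submission
  imports Defs
begin

definition fmod :: "('a,'c) ring_scheme \<Rightarrow> nat \<Rightarrow> ('a, nat \<Rightarrow> 'a) module" where
 "fmod R k = \<lparr>carrier = {x. (\<forall>i<k. x i \<in> carrier R) \<and> (\<forall>i. k \<le> i \<longrightarrow> x i = \<zero>\<^bsub>R\<^esub>)},
    monoid.mult = (\<lambda>x y i. x i \<otimes>\<^bsub>R\<^esub> y i), monoid.one = (\<lambda>i. \<one>\<^bsub>R\<^esub>),
    ring.zero = (\<lambda>i. \<zero>\<^bsub>R\<^esub>), ring.add = (\<lambda>x y i. x i \<oplus>\<^bsub>R\<^esub> y i),
    smult = (\<lambda>a x i. a \<otimes>\<^bsub>R\<^esub> x i)\<rparr>"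

lemma fmod_ops:
  "\<zero>\<^bsub>fmod R k\<^esub> = (\<lambda>i. \<zero>\<^bsub>R\<^esub>)"
  "x \<oplus>\<^bsub>fmod R k\<^esub> y = (\<lambda>i. x i \<oplus>\<^bsub>R\<^esub> y i)"
  "a \<odot>\<^bsub>fmod R k\<^esub> x = (\<lambda>i. a \<otimes>\<^bsub>R\<^esub> x i)"
  by (simp_all add: fmod_def)

lemma fmod_mem: "x \<in> carrier (fmod R k) \<longleftrightarrow> (\<forall>i<k. x i \<in> carrier R) \<and> (\<forall>i. k \<le> i \<longrightarrow> x i = \<zero>\<^bsub>R\<^esub>)"
  by (simp add: fmod_def)

lemma fmod_carrierD: "ring R \<Longrightarrow> x \<in> carrier (fmod R k) \<Longrightarrow> \<forall>i. x i \<in> carrier R"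
  by (metis fmod_mem not_le ring.ring_simprules(2))

lemma fmod_left_module:
  assumes "ring R" shows "left_module R (fmod R k)"
proof -
  interpret ring R by fact
  note D = fmod_carrierD[OF assms]
  have ag: "abelian_group (fmod R k)"
  proof (rule abelian_groupI)
    fix x y assume "x \<in> carrier (fmod R k)" "y \<in> carrier (fmod R k)"
    then show "x \<oplus>\<^bsub>fmod R k\<^esub> y \<in> carrier (fmod R k)" by (auto simp: fmod_ops fmod_mem)
  next
    show "\<zero>\<^bsub>fmod R k\<^esub> \<in> carrier (fmod R k)" by (auto simp: fmod_ops fmod_mem)
  next
    fix x y z assume "x \<in> carrier (fmod R k)" "y \<in> carrier (fmod R k)" "z \<in> carrier (fmod R k)"
    with D[of x] D[of y] D[of z]
    show "(x \<oplus>\<^bsub>fmod R k\<^esub> y) \<oplus>\<^bsub>fmod R k\<^esub> z = x \<oplus>\<^bsub>fmod R k\<^esub> (y \<oplus>\<^bsub>fmod R k\<^esub> z)"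
      by (simp add: fmod_ops a_assoc)
  next
    fix x y assume "x \<in> carrier (fmod R k)" "y \<in> carrier (fmod R k)"
    with D[of x] D[of y] show "x \<oplus>\<^bsub>fmod R k\<^esub> y = y \<oplus>\<^bsub>fmod R k\<^esub> x"
      by (simp add: fmod_ops a_comm)
  next
    fix x assume "x \<in> carrier (fmod R k)"
    with D[of x] show "\<zero>\<^bsub>fmod R k\<^esub> \<oplus>\<^bsub>fmod R k\<^esub> x = x"
      by (simp add: fmod_ops)
  next
    fix x assume x: "x \<in> carrier (fmod R k)"
    show "\<exists>y\<in>carrier (fmod R k). y \<oplus>\<^bsub>fmod R k\<^esub> x = \<zero>\<^bsub>fmod R k\<^esub>"
      apply (rule bexI[of _ "\<lambda>i. \<ominus>\<^bsub>R\<^esub> x i"])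
      using x D[OF x] by (auto simp: fmod_ops fmod_mem l_neg)
  qed
  show ?thesis
  proof (rule left_module.intro[OF assms ag], rule left_module_axioms.intro)
    fix a x assume "a \<in> carrier R" "x \<in> carrier (fmod R k)"
    then show "a \<odot>\<^bsub>fmod R k\<^esub> x \<in> carrier (fmod R k)"
      by (simp add: fmod_ops fmod_mem)
  next
    fix a b x assume "a \<in> carrier R" "b \<in> carrier R" "x \<in> carrier (fmod R k)"
    with D[of x] show "(a \<oplus>\<^bsub>R\<^esub> b) \<odot>\<^bsub>fmod R k\<^esub> x = a \<odot>\<^bsub>fmod R k\<^esub> x \<oplus>\<^bsub>fmod R k\<^esub> b \<odot>\<^bsub>fmod R k\<^esub> x"
      by (simp add: fmod_ops l_distr)
  next
    fix a x y assume "a \<in> carrier R" "x \<in> carrier (fmod R k)" "y \<in> carrier (fmod R k)"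
    with D[of x] D[of y] show "a \<odot>\<^bsub>fmod R k\<^esub> (x \<oplus>\<^bsub>fmod R k\<^esub> y) = a \<odot>\<^bsub>fmod R k\<^esub> x \<oplus>\<^bsub>fmod R k\<^esub> a \<odot>\<^bsub>fmod R k\<^esub> y"
      by (simp add: fmod_ops r_distr)
  next
    fix a b x assume "a \<in> carrier R" "b \<in> carrier R" "x \<in> carrier (fmod R k)"
    with D[of x] show "(a \<otimes>\<^bsub>R\<^esub> b) \<odot>\<^bsub>fmod R k\<^esub> x = a \<odot>\<^bsub>fmod R k\<^esub> (b \<odot>\<^bsub>fmod R k\<^esub> x)"
      by (simp add: fmod_ops m_assoc)
  next
    fix x assume "x \<in> carrier (fmod R k)"
    with D[of x] show "\<one>\<^bsub>R\<^esub> \<odot>\<^bsub>fmod R k\<^esub> x = x"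
      by (simp add: fmod_ops)
  qed
qed

lemma ag_idem_zero:
  assumes "abelian_group G" "z \<in> carrier G" "z = z \<oplus>\<^bsub>G\<^esub> z"
  shows "z = \<zero>\<^bsub>G\<^esub>"
proof -
  interpret abelian_group G by fact
  have "z \<oplus>\<^bsub>G\<^esub> z = z \<oplus>\<^bsub>G\<^esub> \<zero>\<^bsub>G\<^esub>" using assms by simp
  then show ?thesis using assms add.l_cancel by (metis zero_closed)
qed

context left_module begin

lemma smult_zero_l: "x \<in> carrier M \<Longrightarrow> \<zero>\<^bsub>R\<^esub> \<odot>\<^bsub>M\<^esub> x = \<zero>\<^bsub>M\<^esub>"
proof -
  assume x: "x \<in> carrier M"
  have "\<zero>\<^bsub>R\<^esub> \<odot>\<^bsub>M\<^esub> x = \<zero>\<^bsub>R\<^esub> \<odot>\<^bsub>M\<^esub> x \<oplus>\<^bsub>M\<^esub> \<zero>\<^bsub>R\<^esub> \<odot>\<^bsub>M\<^esub> x"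
    using x smult_l_distr[of "\<zero>\<^bsub>R\<^esub>" "\<zero>\<^bsub>R\<^esub>" x] by (metis R.l_zero R.zero_closed)
  then show ?thesis using x smult_closed[of "\<zero>\<^bsub>R\<^esub>" x] ag_idem_zero[OF M.abelian_group_axioms]
    by blast
qed

lemma smult_zero_r: "a \<in> carrier R \<Longrightarrow> a \<odot>\<^bsub>M\<^esub> \<zero>\<^bsub>M\<^esub> = \<zero>\<^bsub>M\<^esub>"
proof -
  assume a: "a \<in> carrier R"
  have "a \<odot>\<^bsub>M\<^esub> \<zero>\<^bsub>M\<^esub> = a \<odot>\<^bsub>M\<^esub> \<zero>\<^bsub>M\<^esub> \<oplus>\<^bsub>M\<^esub> a \<odot>\<^bsub>M\<^esub> \<zero>\<^bsub>M\<^esub>"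
    using a smult_r_distr[of a "\<zero>\<^bsub>M\<^esub>" "\<zero>\<^bsub>M\<^esub>"] by (metis M.l_zero M.zero_closed)
  then show ?thesis using a smult_closed[of a "\<zero>\<^bsub>M\<^esub>"] ag_idem_zero[OF M.abelian_group_axioms]
    by blast
qed

lemma finsum_smult:
  assumes "finite I" "f \<in> I \<rightarrow> carrier M" "a \<in> carrier R"
  shows "a \<odot>\<^bsub>M\<^esub> finsum M f I = finsum M (\<lambda>i. a \<odot>\<^bsub>M\<^esub> f i) I"
  using assms
proof (induction I rule: finite_induct)
  case empty then show ?case by (simp add: smult_zero_r)
next
  case (insert i I)
  then have fI: "f \<in> I \<rightarrow> carrier M" "f i \<in> carrier M" by auto
  have g: "(\<lambda>i. a \<odot>\<^bsub>M\<^esub> f i) \<in> I \<rightarrow> carrier M" using fI insert.prems smult_closed by auto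
  show ?case
    using insert fI g smult_closed[of a "f i"] M.finsum_closed[OF fI(1)]
    by (simp add: smult_r_distr)
qed

end

definition addhom where
  "addhom M N h \<longleftrightarrow> h \<in> carrier M \<rightarrow> carrier N \<and>
     (\<forall>x\<in>carrier M. \<forall>y\<in>carrier M. h (x \<oplus>\<^bsub>M\<^esub> y) = h x \<oplus>\<^bsub>N\<^esub> h y)"

lemma lmod_hom_addhom: "h \<in> lmod_hom R M N \<Longrightarrow> addhom M N h"
  by (simp add: lmod_hom_def addhom_def)

lemma lmod_hom_restrict:
  "h \<in> lmod_hom R M (restrict_scalars f N) \<longleftrightarrow>
     addhom M N h \<and> (\<forall>a\<in>carrier R. \<forall>x\<in>carrier M. h (a \<odot>\<^bsub>M\<^esub> x) = f a \<odot>\<^bsub>N\<^esub> h x)"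
  by (simp add: lmod_hom_def addhom_def restrict_scalars_def)

lemma lmod_homD:
  assumes "h \<in> lmod_hom R M N"
  shows "\<And>x. x \<in> carrier M \<Longrightarrow> h x \<in> carrier N"
    "\<And>x y. x \<in> carrier M \<Longrightarrow> y \<in> carrier M \<Longrightarrow> h (x \<oplus>\<^bsub>M\<^esub> y) = h x \<oplus>\<^bsub>N\<^esub> h y"
    "\<And>a x. a \<in> carrier R \<Longrightarrow> x \<in> carrier M \<Longrightarrow> h (a \<odot>\<^bsub>M\<^esub> x) = a \<odot>\<^bsub>N\<^esub> h x"
  using assms by (auto simp: lmod_hom_def)

lemma lmod_homI:
  assumes "\<And>x. x \<in> carrier M \<Longrightarrow> h x \<in> carrier N"
    "\<And>x y. x \<in> carrier M \<Longrightarrow> y \<in> carrier M \<Longrightarrow> h (x \<oplus>\<^bsub>M\<^esub> y) = h x \<oplus>\<^bsub>N\<^esub> h y"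
    "\<And>a x. a \<in> carrier R \<Longrightarrow> x \<in> carrier M \<Longrightarrow> h (a \<odot>\<^bsub>M\<^esub> x) = a \<odot>\<^bsub>N\<^esub> h x"
  shows "h \<in> lmod_hom R M N"
  using assms by (auto simp: lmod_hom_def)

lemma addhom_zero:
  assumes "abelian_group M" "abelian_group N" "addhom M N h"
  shows "h \<zero>\<^bsub>M\<^esub> = \<zero>\<^bsub>N\<^esub>"
proof -
  interpret M: abelian_group M by fact
  interpret N: abelian_group N by fact
  have c: "h \<zero>\<^bsub>M\<^esub> \<in> carrier N" using assms(3) by (auto simp: addhom_def)
  have "h \<zero>\<^bsub>M\<^esub> = h \<zero>\<^bsub>M\<^esub> \<oplus>\<^bsub>N\<^esub> h \<zero>\<^bsub>M\<^esub>"
    using assms(3) by (metis M.l_zero M.zero_closed addhom_def)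
  then show ?thesis using c ag_idem_zero[OF assms(2)] by blast
qed

lemma addhom_minus:
  assumes "abelian_group M" "abelian_group N" "addhom M N h" "x \<in> carrier M"
  shows "h (\<ominus>\<^bsub>M\<^esub> x) = \<ominus>\<^bsub>N\<^esub> h x"
proof -
  interpret M: abelian_group M by fact
  interpret N: abelian_group N by fact
  have c: "h x \<in> carrier N" "h (\<ominus>\<^bsub>M\<^esub> x) \<in> carrier N" using assms by (auto simp: addhom_def)
  have "h (\<ominus>\<^bsub>M\<^esub> x) \<oplus>\<^bsub>N\<^esub> h x = \<zero>\<^bsub>N\<^esub>"
    using assms addhom_zero[OF assms(1-3)] by (metis M.a_inv_closed M.l_neg addhom_def)
  then show ?thesis using c by (metis N.minus_equality)
qed

lemma addhom_finsum:
  assumes "abelian_group M" "abelian_group N" "addhom M N h" "finite I" "f \<in> I \<rightarrow> carrier M"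
  shows "h (finsum M f I) = finsum N (\<lambda>i. h (f i)) I"
  using assms(4,5)
proof (induction I rule: finite_induct)
  case empty
  interpret M: abelian_group M by fact
  interpret N: abelian_group N by fact
  show ?case using addhom_zero[OF assms(1-3)] by simp
next
  case (insert i I)
  interpret M: abelian_group M by fact
  interpret N: abelian_group N by fact
  have fI: "f \<in> I \<rightarrow> carrier M" "f i \<in> carrier M" using insert by auto
  have g: "(\<lambda>i. h (f i)) \<in> insert i I \<rightarrow> carrier N" using insert.prems assms(3) by (auto simp: addhom_def)
  show ?case
    using insert fI g M.finsum_closed[OF fI(1)] assms(3) unfolding addhom_def
    by simp
qed

definition lin :: "('a, 'b, 'd) module_scheme \<Rightarrow> (nat \<Rightarrow> 'b) \<Rightarrow> nat \<Rightarrow> (nat \<Rightarrow> 'a) \<Rightarrow> 'b" where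
  "lin M w k x = finsum M (\<lambda>j. x j \<odot>\<^bsub>M\<^esub> w j) {..<k}"

lemma lin_closed:
  assumes "left_module R M" "\<forall>j<k. w j \<in> carrier M" "x \<in> carrier (fmod R k)"
  shows "lin M w k x \<in> carrier M"
proof -
  interpret left_module R M by fact
  show ?thesis unfolding lin_def
    using assms fmod_carrierD[OF R.ring_axioms] by (auto intro!: M.finsum_closed smult_closed)
qed

lemma lin_hom:
  assumes "left_module R M" "\<forall>j<k. w j \<in> carrier M"
  shows "lin M w k \<in> lmod_hom R (fmod R k) M"
proof -
  interpret left_module R M by fact
  note D = fmod_carrierD[OF R.ring_axioms]
  show ?thesis
  proof (rule lmod_homI)
    fix x assume "x \<in> carrier (fmod R k)" then show "lin M w k x \<in> carrier M"
      using lin_closed assms by blast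
  next
    fix x y assume x: "x \<in> carrier (fmod R k)" and y: "y \<in> carrier (fmod R k)"
    have "lin M w k (x \<oplus>\<^bsub>fmod R k\<^esub> y) = finsum M (\<lambda>j. x j \<odot>\<^bsub>M\<^esub> w j \<oplus>\<^bsub>M\<^esub> y j \<odot>\<^bsub>M\<^esub> w j) {..<k}"
      unfolding lin_def fmod_ops
      by (rule M.finsum_cong) (use assms D[OF x] D[OF y] in \<open>auto simp: smult_l_distr intro!: smult_closed\<close>)
    also have "\<dots> = lin M w k x \<oplus>\<^bsub>M\<^esub> lin M w k y"
      unfolding lin_def
      by (rule M.finsum_addf) (use assms D[OF x] D[OF y] in \<open>auto intro!: smult_closed\<close>)
    finally show "lin M w k (x \<oplus>\<^bsub>fmod R k\<^esub> y) = lin M w k x \<oplus>\<^bsub>M\<^esub> lin M w k y" .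
  next
    fix a x assume a: "a \<in> carrier R" and x: "x \<in> carrier (fmod R k)"
    have "lin M w k (a \<odot>\<^bsub>fmod R k\<^esub> x) = finsum M (\<lambda>j. a \<odot>\<^bsub>M\<^esub> (x j \<odot>\<^bsub>M\<^esub> w j)) {..<k}"
      unfolding lin_def fmod_ops
      by (rule M.finsum_cong) (use assms a D[OF x] in \<open>auto simp: smult_assoc1 intro!: smult_closed\<close>)
    also have "\<dots> = a \<odot>\<^bsub>M\<^esub> lin M w k x"
      unfolding lin_def
      by (rule finsum_smult[symmetric]) (use assms a D[OF x] in \<open>auto intro!: smult_closed\<close>)
    finally show "lin M w k (a \<odot>\<^bsub>fmod R k\<^esub> x) = a \<odot>\<^bsub>M\<^esub> lin M w k x" .
  qed
qed


subsection \<open>Standard free modules\<close>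

definition unitv :: "('a,'c) ring_scheme \<Rightarrow> nat \<Rightarrow> nat \<Rightarrow> 'a" where
  "unitv R i = (\<lambda>j. if j = i then \<one>\<^bsub>R\<^esub> else \<zero>\<^bsub>R\<^esub>)"

lemma unitv_mem: "ring R \<Longrightarrow> i < k \<Longrightarrow> unitv R i \<in> carrier (fmod R k)"
  by (auto simp: unitv_def fmod_mem ring.ring_simprules)

lemma fmod_finsum_eval:
  assumes "ring R" "finite I" "F \<in> I \<rightarrow> carrier (fmod R k)"
  shows "finsum (fmod R k) F I j = finsum R (\<lambda>i. F i j) I"
  using assms(2,3)
proof (induction I rule: finite_induct)
  case empty
  interpret R: ring R by fact
  interpret M: left_module R "fmod R k" by (rule fmod_left_module[OF assms(1)])
  show ?case by (simp add: fmod_ops)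
next
  case (insert i I)
  interpret R: ring R by fact
  interpret M: left_module R "fmod R k" by (rule fmod_left_module[OF assms(1)])
  have fI: "F \<in> I \<rightarrow> carrier (fmod R k)" "F i \<in> carrier (fmod R k)" using insert by auto
  have g: "(\<lambda>i. F i j) \<in> insert i I \<rightarrow> carrier R"
    using insert.prems fmod_carrierD[OF assms(1)] by blast
  show ?case
    using insert fI g M.finsum_closed[OF fI(1)] by (simp add: fmod_ops)
qed

lemma fmod_expand:
  assumes "ring R" "x \<in> carrier (fmod R k)"
  shows "lin (fmod R k) (unitv R) k x = x"
proof
  fix j
  interpret R: ring R by fact
  interpret M: left_module R "fmod R k" by (rule fmod_left_module[OF assms(1)])
  have xc: "\<forall>i. x i \<in> carrier R" using fmod_carrierD[OF assms] .
  have F: "(\<lambda>i. x i \<odot>\<^bsub>fmod R k\<^esub> unitv R i) \<in> {..<k} \<rightarrow> carrier (fmod R k)"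
    using unitv_mem[OF assms(1)] xc by (auto intro!: M.smult_closed)
  have "lin (fmod R k) (unitv R) k x j = finsum R (\<lambda>i. x i \<otimes>\<^bsub>R\<^esub> unitv R i j) {..<k}"
    unfolding lin_def by (subst fmod_finsum_eval[OF assms(1) _ F]) (simp_all add: fmod_ops)
  also have "\<dots> = finsum R (\<lambda>i. if j = i then x i else \<zero>\<^bsub>R\<^esub>) {..<k}"
    by (rule R.finsum_cong) (auto simp: unitv_def xc simp_implies_def)
  also have "\<dots> = x j"
  proof (cases "j < k")
    case True then show ?thesis using R.finsum_singleton[of j "{..<k}" x] xc by auto
  next
    case False
    then have "finsum R (\<lambda>i. if j = i then x i else \<zero>\<^bsub>R\<^esub>) {..<k} = finsum R (\<lambda>i. \<zero>\<^bsub>R\<^esub>) {..<k}"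
      by (intro R.finsum_cong) auto
    then show ?thesis using False assms(2) by (simp add: fmod_mem)
  qed
  finally show "lin (fmod R k) (unitv R) k x j = x j" .
qed

lemma hom_lin:
  assumes "left_module R M" "h \<in> lmod_hom R (fmod R k) M" "x \<in> carrier (fmod R k)"
  shows "h x = lin M (\<lambda>j. h (unitv R j)) k x"
proof -
  interpret M: left_module R M by fact
  interpret F: left_module R "fmod R k" by (rule fmod_left_module[OF M.R.ring_axioms])
  have xc: "\<forall>i. x i \<in> carrier R" using fmod_carrierD[OF M.R.ring_axioms assms(3)] .
  have Fc: "(\<lambda>i. x i \<odot>\<^bsub>fmod R k\<^esub> unitv R i) \<in> {..<k} \<rightarrow> carrier (fmod R k)"
    using unitv_mem[OF M.R.ring_axioms] xc by (auto intro!: F.smult_closed)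
  have "h x = h (lin (fmod R k) (unitv R) k x)" using fmod_expand[OF M.R.ring_axioms assms(3)] by simp
  also have "\<dots> = finsum M (\<lambda>i. h (x i \<odot>\<^bsub>fmod R k\<^esub> unitv R i)) {..<k}"
    unfolding lin_def
    by (rule addhom_finsum[OF F.abelian_group_axioms M.abelian_group_axioms lmod_hom_addhom[OF assms(2)] _ Fc]) simp
  also have "\<dots> = lin M (\<lambda>j. h (unitv R j)) k x"
    unfolding lin_def
    by (rule M.finsum_cong) (use lmod_homD[OF assms(2)] xc unitv_mem[OF M.R.ring_axioms] in \<open>auto intro!: M.smult_closed\<close>)
  finally show ?thesis .
qed


lemma zero_ring_fg_free:
  assumes "left_module R M" "\<one>\<^bsub>R\<^esub> = \<zero>\<^bsub>R\<^esub>"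
  shows "fg_free R M"
proof -
  interpret left_module R M by fact
  have c: "x = \<zero>\<^bsub>M\<^esub>" if "x \<in> carrier M" for x
    using smult_one[OF that] smult_zero_l[OF that] assms(2) by simp
  show ?thesis unfolding fg_free_def
    apply (rule conjI[OF assms(1)])
    apply (rule exI[of _ "{}"])
    using c by auto
qed

lemma lin_reindex:
  assumes "left_module R P" "inj_on b {..<k}" "\<forall>j<k. b j \<in> carrier P" "c \<in> b ` {..<k} \<rightarrow> carrier R"
  shows "finsum P (\<lambda>\<beta>. c \<beta> \<odot>\<^bsub>P\<^esub> \<beta>) (b ` {..<k}) = lin P b k (\<lambda>j. if j < k then c (b j) else \<zero>\<^bsub>R\<^esub>)"
proof -
  interpret left_module R P by fact
  have "finsum P (\<lambda>\<beta>. c \<beta> \<odot>\<^bsub>P\<^esub> \<beta>) (b ` {..<k}) = finsum P (\<lambda>j. c (b j) \<odot>\<^bsub>P\<^esub> b j) {..<k}"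
    by (rule M.finsum_reindex) (use assms in \<open>auto intro!: smult_closed\<close>)
  also have "\<dots> = lin P b k (\<lambda>j. if j < k then c (b j) else \<zero>\<^bsub>R\<^esub>)"
    unfolding lin_def
    by (rule M.finsum_cong) (use assms in \<open>auto intro!: smult_closed simp: simp_implies_def\<close>)
  finally show ?thesis .
qed

lemma fmod_fg_free:
  assumes "ring R" shows "fg_free R (fmod R k)"
proof (cases "\<one>\<^bsub>R\<^esub> = \<zero>\<^bsub>R\<^esub>")
  case True then show ?thesis using zero_ring_fg_free fmod_left_module[OF assms] by blast
next
  case False
  interpret R: ring R by fact
  interpret M: left_module R "fmod R k" by (rule fmod_left_module[OF assms])
  let ?B = "unitv R ` {..<k}"
  have inj: "inj_on (unitv R) {..<k}"
  proof (rule inj_onI)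
    fix i j assume "i \<in> {..<k}" "j \<in> {..<k}" "unitv R i = unitv R j"
    then have "unitv R i i = unitv R j i" by simp
    then show "i = j" using False by (auto simp: unitv_def split: if_splits)
  qed
  have um: "\<forall>j<k. unitv R j \<in> carrier (fmod R k)" using unitv_mem[OF assms] by blast
  show ?thesis unfolding fg_free_def
  proof (intro conjI exI[of _ ?B] ballI)
    show "left_module R (fmod R k)" by (rule M.left_module_axioms)
    show "finite ?B" by simp
    show "?B \<subseteq> carrier (fmod R k)" using um by auto
  next
    fix x assume x: "x \<in> carrier (fmod R k)"
    let ?c = "restrict (\<lambda>\<beta>. x (the_inv_into {..<k} (unitv R) \<beta>)) ?B"
    have xc: "\<forall>i. x i \<in> carrier R" using fmod_carrierD[OF assms x] .
    have cB: "?c \<in> ?B \<rightarrow>\<^sub>E carrier R" using xc by auto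
    have eqx: "(\<lambda>j. if j < k then ?c (unitv R j) else \<zero>\<^bsub>R\<^esub>) = x"
      using x inj by (auto simp: fmod_mem the_inv_into_f_f)
    show "\<exists>!c. c \<in> ?B \<rightarrow>\<^sub>E carrier R \<and> x = finsum (fmod R k) (\<lambda>b. c b \<odot>\<^bsub>fmod R k\<^esub> b) ?B"
    proof (rule ex1I[of _ ?c])
      have "finsum (fmod R k) (\<lambda>b. ?c b \<odot>\<^bsub>fmod R k\<^esub> b) ?B = lin (fmod R k) (unitv R) k (\<lambda>j. if j < k then ?c (unitv R j) else \<zero>\<^bsub>R\<^esub>)"
        by (rule lin_reindex[OF M.left_module_axioms inj um]) (use cB in auto)
      then have "finsum (fmod R k) (\<lambda>b. ?c b \<odot>\<^bsub>fmod R k\<^esub> b) ?B = x"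
        using eqx fmod_expand[OF assms x] by simp
      then show "?c \<in> ?B \<rightarrow>\<^sub>E carrier R \<and> x = finsum (fmod R k) (\<lambda>b. ?c b \<odot>\<^bsub>fmod R k\<^esub> b) ?B"
        using cB by simp
    next
      fix c assume c: "c \<in> ?B \<rightarrow>\<^sub>E carrier R \<and> x = finsum (fmod R k) (\<lambda>b. c b \<odot>\<^bsub>fmod R k\<^esub> b) ?B"
      let ?y = "\<lambda>j. if j < k then c (unitv R j) else \<zero>\<^bsub>R\<^esub>"
      have y: "?y \<in> carrier (fmod R k)" using c by (auto simp: fmod_mem)
      have "x = lin (fmod R k) (unitv R) k ?y"
        using c lin_reindex[OF M.left_module_axioms inj um, of c] by auto
      then have "x = ?y" using fmod_expand[OF assms y] by simp
      then have "c (unitv R j) = x j" if "j < k" for j using that by simp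
      then have "c \<beta> = ?c \<beta>" for \<beta>
      proof (cases "\<beta> \<in> ?B")
        case True
        then obtain j where "j < k" "\<beta> = unitv R j" by auto
        then show ?thesis using \<open>\<And>j. j < k \<Longrightarrow> c (unitv R j) = x j\<close> the_inv_into_f_f[OF inj] by simp
      next
        case False then show ?thesis using c by (simp add: PiE_def extensional_def)
      qed
      then show "c = ?c" by (rule ext)
    qed
  qed
qed

lemma fg_free_lin:
  assumes "fg_free R P"
  shows "\<exists>k b. (\<forall>j<k. b j \<in> carrier P) \<and> bij_betw (lin P b k) (carrier (fmod R k)) (carrier P)"
proof -
  from assms obtain B where lm: "left_module R P" and B: "finite B" "B \<subseteq> carrier P"
    and u: "\<forall>x\<in>carrier P. \<exists>!c. c \<in> B \<rightarrow>\<^sub>E carrier R \<and> x = finsum P (\<lambda>b. c b \<odot>\<^bsub>P\<^esub> b) B"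
    unfolding fg_free_def by blast
  interpret left_module R P by fact
  obtain b where bb: "bij_betw b {0..<card B} B" using ex_bij_betw_nat_finite[OF B(1)] by blast
  define k where "k = card B"
  have bb': "bij_betw b {..<k} B" using bb by (simp add: k_def atLeast0LessThan)
  have inj: "inj_on b {..<k}" and Bim: "b ` {..<k} = B" using bb' by (auto simp: bij_betw_def)
  have bm: "\<forall>j<k. b j \<in> carrier P" using Bim B by auto
  show ?thesis
  proof (intro exI conjI)
    show "\<forall>j<k. b j \<in> carrier P" by (rule bm)
    show "bij_betw (lin P b k) (carrier (fmod R k)) (carrier P)"
      unfolding bij_betw_def
    proof (intro conjI)
      show "inj_on (lin P b k) (carrier (fmod R k))"
      proof (rule inj_onI)
        fix y1 y2 assume y1: "y1 \<in> carrier (fmod R k)" and y2: "y2 \<in> carrier (fmod R k)"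
          and eq: "lin P b k y1 = lin P b k y2"
        define c1 where "c1 = restrict (\<lambda>\<beta>. y1 (the_inv_into {..<k} b \<beta>)) B"
        define c2 where "c2 = restrict (\<lambda>\<beta>. y2 (the_inv_into {..<k} b \<beta>)) B"
        have yc1: "\<forall>i. y1 i \<in> carrier R" using fmod_carrierD[OF R.ring_axioms y1] .
        have yc2: "\<forall>i. y2 i \<in> carrier R" using fmod_carrierD[OF R.ring_axioms y2] .
        have c1B: "c1 \<in> B \<rightarrow>\<^sub>E carrier R" using yc1 by (auto simp: c1_def)
        have c2B: "c2 \<in> B \<rightarrow>\<^sub>E carrier R" using yc2 by (auto simp: c2_def)
        have e1: "(\<lambda>j. if j < k then c1 (b j) else \<zero>\<^bsub>R\<^esub>) = y1"
          using y1 inj Bim by (auto simp: fmod_mem the_inv_into_f_f c1_def)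
        have e2: "(\<lambda>j. if j < k then c2 (b j) else \<zero>\<^bsub>R\<^esub>) = y2"
          using y2 inj Bim by (auto simp: fmod_mem the_inv_into_f_f c2_def)
        have s1: "finsum P (\<lambda>\<beta>. c1 \<beta> \<odot>\<^bsub>P\<^esub> \<beta>) B = lin P b k y1"
          using lin_reindex[OF lm inj bm, of c1] c1B e1 Bim by auto
        have s2: "finsum P (\<lambda>\<beta>. c2 \<beta> \<odot>\<^bsub>P\<^esub> \<beta>) B = lin P b k y2"
          using lin_reindex[OF lm inj bm, of c2] c2B e2 Bim by auto
        have xP: "lin P b k y1 \<in> carrier P" using lin_closed[OF lm bm y1] .
        have ex: "\<exists>!c. c \<in> B \<rightarrow>\<^sub>E carrier R \<and> lin P b k y1 = finsum P (\<lambda>b. c b \<odot>\<^bsub>P\<^esub> b) B"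
          using u xP by blast
        then obtain c0 where h: "\<forall>c. c \<in> B \<rightarrow>\<^sub>E carrier R \<and> lin P b k y1 = finsum P (\<lambda>b. c b \<odot>\<^bsub>P\<^esub> b) B \<longrightarrow> c = c0"
          by blast
        have "c1 = c0" by (rule h[rule_format]) (use c1B s1 in simp)
        moreover have "c2 = c0" by (rule h[rule_format]) (use c2B s2 eq in simp)
        ultimately have "c1 = c2" by simp
        then show "y1 = y2" using e1 e2 by metis
      qed
    next
      show "lin P b k ` carrier (fmod R k) = carrier P"
      proof
        show "lin P b k ` carrier (fmod R k) \<subseteq> carrier P" using lin_closed[OF lm bm] by auto
      next
        show "carrier P \<subseteq> lin P b k ` carrier (fmod R k)"
        proof
          fix x assume x: "x \<in> carrier P"
          then obtain c where c: "c \<in> B \<rightarrow>\<^sub>E carrier R" "x = finsum P (\<lambda>b. c b \<odot>\<^bsub>P\<^esub> b) B"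
            using u by blast
          let ?y = "\<lambda>j. if j < k then c (b j) else \<zero>\<^bsub>R\<^esub>"
          have y: "?y \<in> carrier (fmod R k)" using c Bim by (auto simp: fmod_mem)
          have "x = lin P b k ?y" using c lin_reindex[OF lm inj bm, of c] Bim by auto
          then show "x \<in> lin P b k ` carrier (fmod R k)" using y by blast
        qed
      qed
    qed
  qed
qed

subsection \<open>Resolutions\<close>

definition res where
  "res n R M P d0 d \<longleftrightarrow>
       d0 \<in> lmod_hom R (P 0) M \<and> d0 ` carrier (P 0) = carrier M \<and>
       (\<forall>i\<in>{1..n}. d i \<in> lmod_hom R (P i) (P (i - 1))) \<and>
       (n \<ge> 1 \<longrightarrow> d 1 ` carrier (P 1) = mod_kernel (P 0) M d0) \<and>
       (\<forall>i. 1 \<le> i \<and> i < n \<longrightarrow> d (Suc i) ` carrier (P (Suc i)) = mod_kernel (P i) (P (i - 1)) (d i))"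

lemma FP_res: "FP n R M \<longleftrightarrow> left_module R M \<and> (\<exists>(P :: nat \<Rightarrow> ('a, nat \<Rightarrow> 'a) module) d0 d. (\<forall>i\<le>n. fg_free R (P i)) \<and> res n R M P d0 d)"
  unfolding FP_def res_def by blast

lemma hom_comp:
  "f \<in> lmod_hom R A B \<Longrightarrow> g \<in> lmod_hom R B C \<Longrightarrow> (\<lambda>x. g (f x)) \<in> lmod_hom R A C"
  unfolding lmod_hom_def by (auto simp: Pi_def)

lemma hom_inv:
  assumes "left_module R A" "f \<in> lmod_hom R A B" "bij_betw f (carrier A) (carrier B)"
  shows "the_inv_into (carrier A) f \<in> lmod_hom R B A"
proof -
  interpret left_module R A by fact
  have inj: "inj_on f (carrier A)" and im: "f ` carrier A = carrier B" using assms(3) by (auto simp: bij_betw_def)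
  let ?g = "the_inv_into (carrier A) f"
  have gc: "?g y \<in> carrier A" if "y \<in> carrier B" for y
    using the_inv_into_into[OF inj] that im by blast
  have fg: "f (?g y) = y" if "y \<in> carrier B" for y
    using f_the_inv_into_f[OF inj] that im by blast
  show ?thesis
  proof (rule lmod_homI)
    fix y assume "y \<in> carrier B" then show "?g y \<in> carrier A" by (rule gc)
  next
    fix y1 y2 assume y: "y1 \<in> carrier B" "y2 \<in> carrier B"
    have e: "f (?g y1 \<oplus>\<^bsub>A\<^esub> ?g y2) = y1 \<oplus>\<^bsub>B\<^esub> y2"
      using lmod_homD(2)[OF assms(2) gc gc] y fg by simp
    have c: "?g y1 \<oplus>\<^bsub>A\<^esub> ?g y2 \<in> carrier A" using gc y by simp
    show "?g (y1 \<oplus>\<^bsub>B\<^esub> y2) = ?g y1 \<oplus>\<^bsub>A\<^esub> ?g y2"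
      by (rule the_inv_into_f_eq[OF inj e c])
  next
    fix a y assume a: "a \<in> carrier R" and y: "y \<in> carrier B"
    have e: "f (a \<odot>\<^bsub>A\<^esub> ?g y) = a \<odot>\<^bsub>B\<^esub> y"
      using lmod_homD(3)[OF assms(2) a gc] y fg by simp
    have c: "a \<odot>\<^bsub>A\<^esub> ?g y \<in> carrier A" using gc y a smult_closed by simp
    show "?g (a \<odot>\<^bsub>B\<^esub> y) = a \<odot>\<^bsub>A\<^esub> ?g y"
      by (rule the_inv_into_f_eq[OF inj e c])
  qed
qed

lemma inv_image_eq:
  assumes "bij_betw f A B" "Z \<subseteq> B"
  shows "the_inv_into A f ` Z = {x \<in> A. f x \<in> Z}"
proof -
  have inj: "inj_on f A" and im: "f ` A = B" using assms(1) by (auto simp: bij_betw_def)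
  show ?thesis
  proof
    show "the_inv_into A f ` Z \<subseteq> {x \<in> A. f x \<in> Z}"
    proof
      fix x assume "x \<in> the_inv_into A f ` Z"
      then obtain z where z: "z \<in> Z" "x = the_inv_into A f z" by blast
      then have zB: "z \<in> f ` A" using assms(2) im by blast
      show "x \<in> {x \<in> A. f x \<in> Z}"
        using the_inv_into_into[OF inj zB subset_refl] f_the_inv_into_f[OF inj zB] z by simp
    qed
  next
    show "{x \<in> A. f x \<in> Z} \<subseteq> the_inv_into A f ` Z"
    proof
      fix x assume x: "x \<in> {x \<in> A. f x \<in> Z}"
      then have "the_inv_into A f (f x) = x" using the_inv_into_f_f[OF inj] by simp
      then show "x \<in> the_inv_into A f ` Z" using x by (metis (mono_tags, lifting) image_eqI mem_Collect_eq)
    qed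
  qed
qed

lemma inv_zero_iff:
  assumes "left_module R A" "left_module R B" "f \<in> lmod_hom R A B" "bij_betw f (carrier A) (carrier B)"
    "q \<in> carrier B"
  shows "the_inv_into (carrier A) f q = \<zero>\<^bsub>A\<^esub> \<longleftrightarrow> q = \<zero>\<^bsub>B\<^esub>"
proof -
  interpret A: left_module R A by fact
  interpret B: left_module R B by fact
  have inj: "inj_on f (carrier A)" and im: "f ` carrier A = carrier B" using assms(4) by (auto simp: bij_betw_def)
  have f0: "f \<zero>\<^bsub>A\<^esub> = \<zero>\<^bsub>B\<^esub>"
    by (rule addhom_zero[OF A.abelian_group_axioms B.abelian_group_axioms lmod_hom_addhom[OF assms(3)]])
  show ?thesis
    using f0 the_inv_into_f_f[OF inj, of "\<zero>\<^bsub>A\<^esub>"] f_the_inv_into_f[OF inj, of q] assms(5) im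
    by auto
qed

lemma normalize:
  assumes "FP n R M"
  shows "\<exists>k D0 D. res n R M (\<lambda>i. fmod R (k i)) D0 D"
proof -
  from assms obtain P :: "nat \<Rightarrow> ('a, nat \<Rightarrow> 'a) module" and d0 d where lm: "left_module R M" and fg: "\<forall>i\<le>n. fg_free R (P i)"
    and r: "res n R M P d0 d" unfolding FP_res by blast
  interpret M: left_module R M by fact
  have "\<forall>i. \<exists>p. i \<le> n \<longrightarrow> (\<forall>j<fst p. snd p j \<in> carrier (P i)) \<and>
          bij_betw (lin (P i) (snd p) (fst p)) (carrier (fmod R (fst p))) (carrier (P i))"
  proof
    fix i show "\<exists>p. i \<le> n \<longrightarrow> (\<forall>j<fst p. snd p j \<in> carrier (P i)) \<and>
          bij_betw (lin (P i) (snd p) (fst p)) (carrier (fmod R (fst p))) (carrier (P i))"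
    proof (cases "i \<le> n")
      case True
      then obtain k b where "(\<forall>j<k. b j \<in> carrier (P i)) \<and> bij_betw (lin (P i) b k) (carrier (fmod R k)) (carrier (P i))"
        using fg_free_lin fg by blast
      then show ?thesis by (intro exI[of _ "(k, b)"]) simp
    qed simp
  qed
  then obtain pf where pf0: "\<forall>i. i \<le> n \<longrightarrow> (\<forall>j<fst (pf i). snd (pf i) j \<in> carrier (P i)) \<and>
          bij_betw (lin (P i) (snd (pf i)) (fst (pf i))) (carrier (fmod R (fst (pf i)))) (carrier (P i))"
    using choice[of "\<lambda>i p. i \<le> n \<longrightarrow> (\<forall>j<fst p. snd p j \<in> carrier (P i)) \<and>
          bij_betw (lin (P i) (snd p) (fst p)) (carrier (fmod R (fst p))) (carrier (P i))"] by blast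
  have pf: "(\<forall>j<fst (pf i). snd (pf i) j \<in> carrier (P i)) \<and>
          bij_betw (lin (P i) (snd (pf i)) (fst (pf i))) (carrier (fmod R (fst (pf i)))) (carrier (P i))"
    if "i \<le> n" for i using pf0 that by blast
  define k where "k i = fst (pf i)" for i
  define \<phi> where "\<phi> i = lin (P i) (snd (pf i)) (k i)" for i
  define \<psi> where "\<psi> i = the_inv_into (carrier (fmod R (k i))) (\<phi> i)" for i
  have lmP: "left_module R (P i)" if "i \<le> n" for i using fg that by (simp add: fg_free_def)
  have lmA: "left_module R (fmod R (k i))" for i by (rule fmod_left_module[OF M.R.ring_axioms])
  have bij: "bij_betw (\<phi> i) (carrier (fmod R (k i))) (carrier (P i))" if "i \<le> n" for i
    using pf[OF that] by (simp add: \<phi>_def k_def)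
  have phom: "\<phi> i \<in> lmod_hom R (fmod R (k i)) (P i)" if "i \<le> n" for i
    using lin_hom[OF lmP[OF that]] pf[OF that] by (simp add: \<phi>_def k_def)
  have ihom: "\<psi> i \<in> lmod_hom R (P i) (fmod R (k i))" if "i \<le> n" for i
    unfolding \<psi>_def by (rule hom_inv[OF lmA phom[OF that] bij[OF that]])
  have pim: "\<phi> i ` carrier (fmod R (k i)) = carrier (P i)" if "i \<le> n" for i
    using bij[OF that] by (simp add: bij_betw_def)
  define D0 where "D0 = (\<lambda>x. d0 (\<phi> 0 x))"
  define D where "D i = (\<lambda>x. \<psi> (i - 1) (d i (\<phi> i x)))" for i
  from r have d0h: "d0 \<in> lmod_hom R (P 0) M" and d0s: "d0 ` carrier (P 0) = carrier M"
    and dh: "\<forall>i\<in>{1..n}. d i \<in> lmod_hom R (P i) (P (i - 1))"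
    and e1: "n \<ge> 1 \<longrightarrow> d 1 ` carrier (P 1) = mod_kernel (P 0) M d0"
    and e2: "\<forall>i. 1 \<le> i \<and> i < n \<longrightarrow> d (Suc i) ` carrier (P (Suc i)) = mod_kernel (P i) (P (i - 1)) (d i)"
    unfolding res_def by blast+
  have ker_eq: "\<psi> i ` mod_kernel (P i) N h = mod_kernel (fmod R (k i)) N (\<lambda>x. h (\<phi> i x))"
    if "i \<le> n" for i and N :: "('a, 'z) module" and h
  proof -
    have "\<psi> i ` mod_kernel (P i) N h = {x \<in> carrier (fmod R (k i)). \<phi> i x \<in> mod_kernel (P i) N h}"
      unfolding \<psi>_def by (rule inv_image_eq[OF bij[OF that]]) (auto simp: mod_kernel_def)
    also have "\<dots> = mod_kernel (fmod R (k i)) N (\<lambda>x. h (\<phi> i x))"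
      using bij_betw_apply[OF bij[OF that]] by (auto simp: mod_kernel_def)
    finally show ?thesis .
  qed
  have "res n R M (\<lambda>i. fmod R (k i)) D0 D"
    unfolding res_def
  proof (intro conjI ballI allI impI)
    show "D0 \<in> lmod_hom R (fmod R (k 0)) M"
      unfolding D0_def by (rule hom_comp[OF phom d0h]) simp
    show "D0 ` carrier (fmod R (k 0)) = carrier M"
      using pim[of 0] d0s unfolding D0_def image_image[of d0 "\<phi> 0", symmetric] by simp
  next
    fix i assume i: "i \<in> {1..n}"
    show "D i \<in> lmod_hom R (fmod R (k i)) (fmod R (k (i - 1)))"
      unfolding D_def
      by (rule hom_comp[OF hom_comp[OF phom] ihom]) (use i dh in auto)
  next
    assume n: "1 \<le> n"
    have "D 1 ` carrier (fmod R (k 1)) = \<psi> 0 ` (d 1 ` (\<phi> 1 ` carrier (fmod R (k 1))))"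
      by (simp add: D_def image_image)
    also have "\<dots> = \<psi> 0 ` (d 1 ` carrier (P 1))" using n pim[of 1] by simp
    also have "\<dots> = \<psi> 0 ` mod_kernel (P 0) M d0" using e1 n by simp
    also have "\<dots> = mod_kernel (fmod R (k 0)) M D0" unfolding D0_def by (rule ker_eq) simp
    finally show "D 1 ` carrier (fmod R (k 1)) = mod_kernel (fmod R (k 0)) M D0" .
  next
    fix i assume i: "1 \<le> i \<and> i < n"
    have "D (Suc i) ` carrier (fmod R (k (Suc i))) = \<psi> i ` (d (Suc i) ` (\<phi> (Suc i) ` carrier (fmod R (k (Suc i)))))"
      by (simp add: D_def image_image)
    also have "\<dots> = \<psi> i ` (d (Suc i) ` carrier (P (Suc i)))" using i pim[of "Suc i"] by simp
    also have "\<dots> = \<psi> i ` mod_kernel (P i) (P (i - 1)) (d i)" using e2 i by simp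
    also have "\<dots> = mod_kernel (fmod R (k i)) (P (i - 1)) (\<lambda>x. d i (\<phi> i x))" by (rule ker_eq) (use i in simp)
    also have "\<dots> = mod_kernel (fmod R (k i)) (fmod R (k (i - 1))) (D i)"
    proof -
      have "\<psi> (i - 1) (d i (\<phi> i x)) = \<zero>\<^bsub>fmod R (k (i - 1))\<^esub> \<longleftrightarrow> d i (\<phi> i x) = \<zero>\<^bsub>P (i - 1)\<^esub>"
        if x: "x \<in> carrier (fmod R (k i))" for x
      proof -
        have dhi: "d i \<in> lmod_hom R (P i) (P (i - 1))" using dh i by auto
        have "\<phi> i x \<in> carrier (P i)" using lmod_homD(1)[OF phom x] i by simp
        then have "d i (\<phi> i x) \<in> carrier (P (i - 1))" using lmod_homD(1)[OF dhi] by blast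
        moreover have "i - 1 \<le> n" using i by linarith
        ultimately show ?thesis unfolding \<psi>_def
          using inv_zero_iff[OF lmA lmP phom bij] by blast
      qed
      then show ?thesis unfolding mod_kernel_def D_def by auto
    qed
    finally show "D (Suc i) ` carrier (fmod R (k (Suc i))) = mod_kernel (fmod R (k i)) (fmod R (k (i - 1))) (D i)" .
  qed
  then show ?thesis by blast
qed

definition trunc :: "('a,'c) ring_scheme \<Rightarrow> nat \<Rightarrow> (nat \<Rightarrow> 'a) \<Rightarrow> nat \<Rightarrow> 'a" where
  "trunc R K x = (\<lambda>i. if i < K then x i else \<zero>\<^bsub>R\<^esub>)"
definition shift :: "nat \<Rightarrow> (nat \<Rightarrow> 'a) \<Rightarrow> nat \<Rightarrow> 'a" where
  "shift K x = (\<lambda>i. x (K + i))"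
definition inr :: "('a,'c) ring_scheme \<Rightarrow> nat \<Rightarrow> (nat \<Rightarrow> 'a) \<Rightarrow> nat \<Rightarrow> 'a" where
  "inr R K z = (\<lambda>i. if K \<le> i then z (i - K) else \<zero>\<^bsub>R\<^esub>)"
definition neg :: "('a,'c) ring_scheme \<Rightarrow> (nat \<Rightarrow> 'a) \<Rightarrow> nat \<Rightarrow> 'a" where
  "neg R z = (\<lambda>i. \<ominus>\<^bsub>R\<^esub> z i)"

lemma fmod_widen: "ring R \<Longrightarrow> x \<in> carrier (fmod R K) \<Longrightarrow> K \<le> K' \<Longrightarrow> x \<in> carrier (fmod R K')"
  using fmod_carrierD[of R x K] by (auto simp: fmod_mem)

lemma hom_widen:
  "ring R \<Longrightarrow> h \<in> lmod_hom R A (fmod R K) \<Longrightarrow> K \<le> K' \<Longrightarrow> h \<in> lmod_hom R A (fmod R K')"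
  unfolding lmod_hom_def by (auto simp: fmod_ops intro: fmod_widen)

lemma hom_into_sub:
  "h \<in> lmod_hom R A B \<Longrightarrow> h ` carrier A \<subseteq> Z \<Longrightarrow> h \<in> lmod_hom R A (B\<lparr>carrier := Z\<rparr>)"
  unfolding lmod_hom_def by auto

lemma hom_from_sub:
  "h \<in> lmod_hom R B C \<Longrightarrow> Z \<subseteq> carrier B \<Longrightarrow> h \<in> lmod_hom R (B\<lparr>carrier := Z\<rparr>) C"
  unfolding lmod_hom_def by (simp add: Pi_def subset_iff)

lemma hom_to_super:
  "h \<in> lmod_hom R A (B\<lparr>carrier := Z\<rparr>) \<Longrightarrow> Z \<subseteq> carrier B \<Longrightarrow> h \<in> lmod_hom R A B"
  unfolding lmod_hom_def by auto

lemma mod_kernel_fmod: "mod_kernel A (fmod R k) h = mod_kernel A (fmod R k') h"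
  by (simp add: mod_kernel_def fmod_ops)

lemma hom_add:
  assumes "left_module R B" "f \<in> lmod_hom R A B" "g \<in> lmod_hom R A B"
  shows "(\<lambda>x. f x \<oplus>\<^bsub>B\<^esub> g x) \<in> lmod_hom R A B"
proof -
  interpret left_module R B by fact
  note F = lmod_homD[OF assms(2)] and G = lmod_homD[OF assms(3)]
  show ?thesis
  proof (rule lmod_homI)
    fix x assume "x \<in> carrier A" then show "f x \<oplus>\<^bsub>B\<^esub> g x \<in> carrier B" using F G by simp
  next
    fix x y assume xy: "x \<in> carrier A" "y \<in> carrier A"
    then show "f (x \<oplus>\<^bsub>A\<^esub> y) \<oplus>\<^bsub>B\<^esub> g (x \<oplus>\<^bsub>A\<^esub> y) = (f x \<oplus>\<^bsub>B\<^esub> g x) \<oplus>\<^bsub>B\<^esub> (f y \<oplus>\<^bsub>B\<^esub> g y)"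
      using F(1) G(1) by (simp add: F(2) G(2) M.a_ac)
  next
    fix a x assume "a \<in> carrier R" "x \<in> carrier A"
    then show "f (a \<odot>\<^bsub>A\<^esub> x) \<oplus>\<^bsub>B\<^esub> g (a \<odot>\<^bsub>A\<^esub> x) = a \<odot>\<^bsub>B\<^esub> (f x \<oplus>\<^bsub>B\<^esub> g x)"
      using F G by (simp add: smult_r_distr)
  qed
qed

context
  fixes R :: "('a,'c) ring_scheme"
  assumes R: "ring R"
begin

interpretation R: ring R by (rule R)

lemma trunc_hom: "trunc R K \<in> lmod_hom R (fmod R N) (fmod R K)"
  using fmod_carrierD[OF R]
  by (intro lmod_homI) (auto simp: trunc_def fmod_ops fmod_mem)

lemma shift_hom: "shift K \<in> lmod_hom R (fmod R (K + N)) (fmod R N)"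
  by (intro lmod_homI) (auto simp: shift_def fmod_ops fmod_mem)

lemma inr_hom: "inr R K \<in> lmod_hom R (fmod R N) (fmod R (K + N))"
  using fmod_carrierD[OF R]
  by (intro lmod_homI) (auto simp: inr_def fmod_ops fmod_mem)

lemma neg_hom: "neg R \<in> lmod_hom R (fmod R N) (fmod R N)"
  using fmod_carrierD[OF R]
  by (intro lmod_homI) (auto simp: neg_def fmod_ops fmod_mem R.minus_add R.r_minus)

lemma decomp: "x \<in> carrier (fmod R (K + N)) \<Longrightarrow> trunc R K x \<oplus>\<^bsub>fmod R M\<^esub> inr R K (shift K x) = x"
  using fmod_carrierD[OF R]
  by (auto simp: trunc_def inr_def shift_def fmod_ops)

lemma trunc_sum: "u \<in> carrier (fmod R K) \<Longrightarrow> z \<in> carrier (fmod R N) \<Longrightarrow>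
    trunc R K (u \<oplus>\<^bsub>fmod R M\<^esub> inr R K z) = u"
  using fmod_carrierD[OF R]
  by (auto simp: trunc_def inr_def fmod_ops fmod_mem)

lemma shift_sum: "u \<in> carrier (fmod R K) \<Longrightarrow> z \<in> carrier (fmod R N) \<Longrightarrow>
    shift K (u \<oplus>\<^bsub>fmod R M\<^esub> inr R K z) = z"
  using fmod_carrierD[OF R]
  by (auto simp: shift_def inr_def fmod_ops fmod_mem)

lemma trunc_inr: "trunc R K (inr R K z) = \<zero>\<^bsub>fmod R M\<^esub>"
  by (auto simp: trunc_def inr_def fmod_ops)

lemma shift_inr: "shift K (inr R K z) = z"
  by (auto simp: shift_def inr_def)

lemma trunc_id: "x \<in> carrier (fmod R K) \<Longrightarrow> trunc R K x = x"
  by (auto simp: trunc_def fmod_mem)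

lemma shift_zero: "x \<in> carrier (fmod R K) \<Longrightarrow> shift K x = \<zero>\<^bsub>fmod R M\<^esub>"
  by (auto simp: shift_def fmod_mem fmod_ops)

lemma inr_zero: "inr R K (\<zero>\<^bsub>fmod R M\<^esub>) = \<zero>\<^bsub>fmod R M'\<^esub>"
  by (auto simp: inr_def fmod_ops)

lemma neg_cancel: "x \<in> carrier (fmod R K) \<Longrightarrow> neg R x \<oplus>\<^bsub>fmod R M\<^esub> x = \<zero>\<^bsub>fmod R M'\<^esub>"
  using fmod_carrierD[OF R] by (auto simp: neg_def fmod_ops R.l_neg)

lemma neg_zero: "neg R (\<zero>\<^bsub>fmod R M\<^esub>) = \<zero>\<^bsub>fmod R M'\<^esub>"
  by (auto simp: neg_def fmod_ops)

end

lemma rmap_hom: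
  assumes "ring R" "ring S" "f \<in> ring_hom R S"
  shows "(\<lambda>x i. f (x i)) \<in> lmod_hom R (fmod R K) (restrict_scalars f (fmod S K))"
  unfolding lmod_hom_restrict addhom_def
  using fmod_carrierD[OF assms(1)] ring_hom_closed[OF assms(3)] ring_hom_add[OF assms(3)]
    ring_hom_mult[OF assms(3)] ring_hom_zero[OF assms(3) assms(1,2)]
  by (auto simp: fmod_ops fmod_mem)

lemma rmap_mem:
  assumes "ring R" "ring S" "f \<in> ring_hom R S" "x \<in> carrier (fmod R K)"
  shows "(\<lambda>i. f (x i)) \<in> carrier (fmod S K)"
proof -
  have "(\<lambda>x i. f (x i)) \<in> carrier (fmod R K) \<rightarrow> carrier (fmod S K)"
    using rmap_hom[OF assms(1-3), of K] by (simp add: lmod_hom_restrict addhom_def)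
  then show ?thesis using assms(4) by (rule funcset_mem)
qed

lemma submodule_left_module:
  assumes "left_module R P" "Z \<subseteq> carrier P" "\<zero>\<^bsub>P\<^esub> \<in> Z"
    "\<And>x y. x \<in> Z \<Longrightarrow> y \<in> Z \<Longrightarrow> x \<oplus>\<^bsub>P\<^esub> y \<in> Z"
    "\<And>x. x \<in> Z \<Longrightarrow> \<ominus>\<^bsub>P\<^esub> x \<in> Z"
    "\<And>a x. a \<in> carrier R \<Longrightarrow> x \<in> Z \<Longrightarrow> a \<odot>\<^bsub>P\<^esub> x \<in> Z"
  shows "left_module R (P\<lparr>carrier := Z\<rparr>)"
proof -
  interpret left_module R P by fact
  have ag: "abelian_group (P\<lparr>carrier := Z\<rparr>)"
  proof (rule abelian_groupI)
    fix x assume x: "x \<in> carrier (P\<lparr>carrier := Z\<rparr>)"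
    show "\<exists>y\<in>carrier (P\<lparr>carrier := Z\<rparr>). y \<oplus>\<^bsub>P\<lparr>carrier := Z\<rparr>\<^esub> x = \<zero>\<^bsub>P\<lparr>carrier := Z\<rparr>\<^esub>"
      using x assms(2,5) by (intro bexI[of _ "\<ominus>\<^bsub>P\<^esub> x"]) (auto simp: M.l_neg)
  next
    fix x y z assume "x \<in> carrier (P\<lparr>carrier := Z\<rparr>)" "y \<in> carrier (P\<lparr>carrier := Z\<rparr>)" "z \<in> carrier (P\<lparr>carrier := Z\<rparr>)"
    then have "x \<in> carrier P" "y \<in> carrier P" "z \<in> carrier P" using assms(2) by auto
    then show "x \<oplus>\<^bsub>P\<lparr>carrier := Z\<rparr>\<^esub> y \<oplus>\<^bsub>P\<lparr>carrier := Z\<rparr>\<^esub> z = x \<oplus>\<^bsub>P\<lparr>carrier := Z\<rparr>\<^esub> (y \<oplus>\<^bsub>P\<lparr>carrier := Z\<rparr>\<^esub> z)"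
      by (simp add: M.a_assoc)
  next
    fix x y assume "x \<in> carrier (P\<lparr>carrier := Z\<rparr>)" "y \<in> carrier (P\<lparr>carrier := Z\<rparr>)"
    then have "x \<in> carrier P" "y \<in> carrier P" using assms(2) by auto
    then show "x \<oplus>\<^bsub>P\<lparr>carrier := Z\<rparr>\<^esub> y = y \<oplus>\<^bsub>P\<lparr>carrier := Z\<rparr>\<^esub> x"
      by (simp add: M.a_comm)
  next
    fix x assume "x \<in> carrier (P\<lparr>carrier := Z\<rparr>)"
    then have "x \<in> carrier P" using assms(2) by auto
    then show "\<zero>\<^bsub>P\<lparr>carrier := Z\<rparr>\<^esub> \<oplus>\<^bsub>P\<lparr>carrier := Z\<rparr>\<^esub> x = x" by simp
  qed (use assms(3,4) in auto)
  show ?thesis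
    apply (rule left_module.intro[OF R.ring_axioms ag])
    apply (rule left_module_axioms.intro)
    using assms(2,6) subsetD[OF assms(2)] by (auto simp: smult_l_distr smult_r_distr smult_assoc1 smult_one)
qed

lemma lin_restrict:
  assumes "left_module R M" "left_module S L" "h \<in> lmod_hom R M (restrict_scalars f L)"
    "\<forall>j<K. w j \<in> carrier M" "z \<in> carrier (fmod R K)"
  shows "h (lin M w K z) = lin L (\<lambda>j. h (w j)) K (\<lambda>i. f (z i))"
proof -
  interpret M: left_module R M by fact
  interpret L: left_module S L by fact
  have hh: "addhom M L h" and hs: "\<forall>a\<in>carrier R. \<forall>x\<in>carrier M. h (a \<odot>\<^bsub>M\<^esub> x) = f a \<odot>\<^bsub>L\<^esub> h x"
    using assms(3) by (auto simp: lmod_hom_restrict)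
  have zc: "\<forall>i. z i \<in> carrier R" using fmod_carrierD[OF M.R.ring_axioms assms(5)] .
  have "h (lin M w K z) = finsum L (\<lambda>j. h (z j \<odot>\<^bsub>M\<^esub> w j)) {..<K}"
    unfolding lin_def
    by (rule addhom_finsum[OF M.abelian_group_axioms L.abelian_group_axioms hh])
       (use assms(4) zc in \<open>auto intro!: M.smult_closed\<close>)
  also have "\<dots> = lin L (\<lambda>j. h (w j)) K (\<lambda>i. f (z i))"
  proof -
    have "f (z j) \<odot>\<^bsub>L\<^esub> h (w j) \<in> carrier L" if "j < K" for j
    proof -
      have "h (z j \<odot>\<^bsub>M\<^esub> w j) \<in> carrier L"
        using hh assms(4) zc that M.smult_closed unfolding addhom_def by blast
      then show ?thesis using hs assms(4) zc that by simp
    qed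
    then have cl: "(\<lambda>j. f (z j) \<odot>\<^bsub>L\<^esub> h (w j)) \<in> {..<K} \<rightarrow> carrier L" by auto
    show ?thesis unfolding lin_def by (rule L.finsum_cong'[OF refl cl]) (use hs assms(4) zc in auto)
  qed
  finally show ?thesis .
qed

lemma lin_comp:
  assumes "left_module R A" "left_module R B" "h \<in> lmod_hom R A B"
    "\<forall>j<K. w j \<in> carrier A" "z \<in> carrier (fmod R K)"
  shows "h (lin A w K z) = lin B (\<lambda>j. h (w j)) K z"
proof -
  interpret A: left_module R A by fact
  interpret B: left_module R B by fact
  have hh: "addhom A B h" using lmod_hom_addhom[OF assms(3)] .
  have zc: "\<forall>i. z i \<in> carrier R" using fmod_carrierD[OF A.R.ring_axioms assms(5)] .
  have "h (lin A w K z) = finsum B (\<lambda>j. h (z j \<odot>\<^bsub>A\<^esub> w j)) {..<K}"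
    unfolding lin_def
    by (rule addhom_finsum[OF A.abelian_group_axioms B.abelian_group_axioms hh])
       (use assms(4) zc in \<open>auto intro!: A.smult_closed\<close>)
  also have "\<dots> = lin B (\<lambda>j. h (w j)) K z"
    unfolding lin_def
    by (rule B.finsum_cong) (use lmod_homD[OF assms(3)] assms(4) zc in \<open>auto intro!: B.smult_closed\<close>)
  finally show ?thesis .
qed

lemma lin_cong:
  assumes "left_module R M" "\<forall>j<K. w j \<in> carrier M" "\<forall>j<K. w j = w' j" "z \<in> carrier (fmod R K)"
  shows "lin M w K z = lin M w' K z"
proof -
  interpret left_module R M by fact
  have zc: "\<forall>i. z i \<in> carrier R" using fmod_carrierD[OF R.ring_axioms assms(4)] .
  show ?thesis unfolding lin_def using assms(2,3) zc by (intro M.finsum_cong') (auto intro!: smult_closed)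
qed

lemma rs_homD:
  assumes "h \<in> lmod_hom R M (restrict_scalars f N)"
  shows "\<And>x. x \<in> carrier M \<Longrightarrow> h x \<in> carrier N"
    "\<And>x y. x \<in> carrier M \<Longrightarrow> y \<in> carrier M \<Longrightarrow> h (x \<oplus>\<^bsub>M\<^esub> y) = h x \<oplus>\<^bsub>N\<^esub> h y"
    "\<And>a x. a \<in> carrier R \<Longrightarrow> x \<in> carrier M \<Longrightarrow> h (a \<odot>\<^bsub>M\<^esub> x) = f a \<odot>\<^bsub>N\<^esub> h x"
  using assms by (auto simp: lmod_hom_restrict addhom_def)

lemma rs_homI:
  assumes "\<And>x. x \<in> carrier M \<Longrightarrow> h x \<in> carrier N"
    "\<And>x y. x \<in> carrier M \<Longrightarrow> y \<in> carrier M \<Longrightarrow> h (x \<oplus>\<^bsub>M\<^esub> y) = h x \<oplus>\<^bsub>N\<^esub> h y"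
    "\<And>a x. a \<in> carrier R \<Longrightarrow> x \<in> carrier M \<Longrightarrow> h (a \<odot>\<^bsub>M\<^esub> x) = f a \<odot>\<^bsub>N\<^esub> h x"
  shows "h \<in> lmod_hom R M (restrict_scalars f N)"
  using assms by (auto simp: lmod_hom_restrict addhom_def)

lemma hom_comp_rs:
  assumes "g \<in> lmod_hom S A (restrict_scalars f B)" "h \<in> lmod_hom R B C" "f \<in> carrier S \<rightarrow> carrier R"
  shows "(\<lambda>x. h (g x)) \<in> lmod_hom S A (restrict_scalars f C)"
  using rs_homD[OF assms(1)] lmod_homD[OF assms(2)] funcset_mem[OF assms(3)]
  by (intro rs_homI) auto

lemma fmod_add_eq: "x \<oplus>\<^bsub>fmod R K\<^esub> y = x \<oplus>\<^bsub>fmod R K'\<^esub> y"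
  by (simp add: fmod_ops)

lemma fmod_zero_eq: "\<zero>\<^bsub>fmod R K\<^esub> = \<zero>\<^bsub>fmod R K'\<^esub>"
  by (simp add: fmod_ops)

lemma fmod_cancel1:
  assumes "ring R" "\<forall>i. a i \<in> carrier R" "\<forall>i. b i \<in> carrier R" "\<forall>i. c i \<in> carrier R"
  shows "((a \<oplus>\<^bsub>fmod R M\<^esub> b) \<oplus>\<^bsub>fmod R M\<^esub> neg R b) \<oplus>\<^bsub>fmod R M\<^esub> c = a \<oplus>\<^bsub>fmod R M\<^esub> c"
proof -
  interpret ring R by fact
  show ?thesis using assms(2-4) by (auto simp: fmod_ops neg_def a_assoc r_neg)
qed

lemma fmod_cancel2:
  assumes "ring R" "\<forall>i. a i \<in> carrier R" "\<forall>i. b i \<in> carrier R"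
  shows "(a \<oplus>\<^bsub>fmod R M\<^esub> neg R b) \<oplus>\<^bsub>fmod R M\<^esub> b = a"
proof -
  interpret ring R by fact
  show ?thesis using assms(2-3) by (auto simp: fmod_ops neg_def a_assoc l_neg)
qed

lemma fmod_zero_add:
  assumes "ring R" "\<forall>i. a i \<in> carrier R"
  shows "\<zero>\<^bsub>fmod R M\<^esub> \<oplus>\<^bsub>fmod R M'\<^esub> a = a" "a \<oplus>\<^bsub>fmod R M'\<^esub> \<zero>\<^bsub>fmod R M\<^esub> = a"
proof -
  interpret ring R by fact
  show "\<zero>\<^bsub>fmod R M\<^esub> \<oplus>\<^bsub>fmod R M'\<^esub> a = a" "a \<oplus>\<^bsub>fmod R M'\<^esub> \<zero>\<^bsub>fmod R M\<^esub> = a"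
    using assms(2) by (auto simp: fmod_ops)
qed

lemma ker_left_module:
  assumes "left_module R P" "left_module R M" "h \<in> lmod_hom R P M"
  shows "left_module R (P\<lparr>carrier := mod_kernel P M h\<rparr>)"
proof -
  interpret P: left_module R P by fact
  interpret M: left_module R M by fact
  note H = lmod_homD[OF assms(3)]
  have h0: "h \<zero>\<^bsub>P\<^esub> = \<zero>\<^bsub>M\<^esub>"
    by (rule addhom_zero[OF P.abelian_group_axioms M.abelian_group_axioms lmod_hom_addhom[OF assms(3)]])
  show ?thesis
  proof (rule submodule_left_module[OF assms(1)])
    show "mod_kernel P M h \<subseteq> carrier P" by (auto simp: mod_kernel_def)
    show "\<zero>\<^bsub>P\<^esub> \<in> mod_kernel P M h" using h0 by (auto simp: mod_kernel_def)
  next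
    fix x y assume "x \<in> mod_kernel P M h" "y \<in> mod_kernel P M h"
    then show "x \<oplus>\<^bsub>P\<^esub> y \<in> mod_kernel P M h" using H by (auto simp: mod_kernel_def)
  next
    fix x assume "x \<in> mod_kernel P M h"
    then show "\<ominus>\<^bsub>P\<^esub> x \<in> mod_kernel P M h"
      using addhom_minus[OF P.abelian_group_axioms M.abelian_group_axioms lmod_hom_addhom[OF assms(3)]]
      by (auto simp: mod_kernel_def M.add.inv_one)
  next
    fix a x assume "a \<in> carrier R" "x \<in> mod_kernel P M h"
    then show "a \<odot>\<^bsub>P\<^esub> x \<in> mod_kernel P M h" using H by (auto simp: mod_kernel_def M.smult_zero_r P.smult_closed)
  qed
qed

lemma ker_pair:
  assumes rpP: "retractive_pair R S \<rho> \<iota> P F bp bm"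
    and rpM: "retractive_pair R S \<rho> \<iota> M L ap am"
    and mp: "rp_mapping R S P F bp bm M L ap am \<phi> \<psi>"
  shows "retractive_pair R S \<rho> \<iota> (P\<lparr>carrier := mod_kernel P M \<phi>\<rparr>) (F\<lparr>carrier := mod_kernel F L \<psi>\<rparr>) bp bm"
proof -
  from rpP have lP: "left_module R P" and lF: "left_module S F"
    and bph: "bp \<in> lmod_hom R P (restrict_scalars \<rho> F)" and bmh: "bm \<in> lmod_hom S F (restrict_scalars \<iota> P)"
    and rt: "\<forall>y\<in>carrier F. bp (bm y) = y"
    unfolding retractive_pair_def by auto
  from rpM have lM: "left_module R M" and lL: "left_module S L"
    and aph: "ap \<in> lmod_hom R M (restrict_scalars \<rho> L)" and amh: "am \<in> lmod_hom S L (restrict_scalars \<iota> M)"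
    unfolding retractive_pair_def by auto
  from mp have ph: "\<phi> \<in> lmod_hom R P M" and sh: "\<psi> \<in> lmod_hom S F L"
    and c1: "\<forall>x\<in>carrier P. ap (\<phi> x) = \<psi> (bp x)" and c2: "\<forall>y\<in>carrier F. \<phi> (bm y) = am (\<psi> y)"
    unfolding rp_mapping_def by auto
  interpret M: left_module R M by fact
  interpret L: left_module S L by fact
  have ap0: "ap \<zero>\<^bsub>M\<^esub> = \<zero>\<^bsub>L\<^esub>"
    using addhom_zero[OF M.abelian_group_axioms L.abelian_group_axioms] aph by (auto simp: lmod_hom_restrict)
  have am0: "am \<zero>\<^bsub>L\<^esub> = \<zero>\<^bsub>M\<^esub>"
    using addhom_zero[OF L.abelian_group_axioms M.abelian_group_axioms] amh by (auto simp: lmod_hom_restrict)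
  note BP = rs_homD[OF bph] and BM = rs_homD[OF bmh]
  show ?thesis unfolding retractive_pair_def
  proof (intro conjI ballI)
    show "left_module R (P\<lparr>carrier := mod_kernel P M \<phi>\<rparr>)" by (rule ker_left_module[OF lP lM ph])
    show "left_module S (F\<lparr>carrier := mod_kernel F L \<psi>\<rparr>)" by (rule ker_left_module[OF lF lL sh])
    show "bp \<in> lmod_hom R (P\<lparr>carrier := mod_kernel P M \<phi>\<rparr>) (restrict_scalars \<rho> (F\<lparr>carrier := mod_kernel F L \<psi>\<rparr>))"
    proof (rule rs_homI)
      fix x assume "x \<in> carrier (P\<lparr>carrier := mod_kernel P M \<phi>\<rparr>)"
      then show "bp x \<in> carrier (F\<lparr>carrier := mod_kernel F L \<psi>\<rparr>)"
        using BP(1) c1 ap0 by (auto simp: mod_kernel_def)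
    qed (use BP in \<open>auto simp: mod_kernel_def\<close>)
    show "bm \<in> lmod_hom S (F\<lparr>carrier := mod_kernel F L \<psi>\<rparr>) (restrict_scalars \<iota> (P\<lparr>carrier := mod_kernel P M \<phi>\<rparr>))"
    proof (rule rs_homI)
      fix y assume "y \<in> carrier (F\<lparr>carrier := mod_kernel F L \<psi>\<rparr>)"
      then show "bm y \<in> carrier (P\<lparr>carrier := mod_kernel P M \<phi>\<rparr>)"
        using BM(1) c2 am0 by (auto simp: mod_kernel_def)
    qed (use BM in \<open>auto simp: mod_kernel_def\<close>)
  next
    fix y assume "y \<in> carrier (F\<lparr>carrier := mod_kernel F L \<psi>\<rparr>)"
    then show "bp (bm y) = y" using rt by (auto simp: mod_kernel_def)
  qed
qed

lemma fmod_add_closed: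
  assumes "ring R" "x \<in> carrier (fmod R N)" "y \<in> carrier (fmod R N)"
  shows "x \<oplus>\<^bsub>fmod R M\<^esub> y \<in> carrier (fmod R N)"
proof -
  interpret ring R by fact
  show ?thesis using assms(2,3) by (auto simp: fmod_mem fmod_ops)
qed

lemma step:
  fixes R :: "('a,'c) ring_scheme" and S :: "('s,'e) ring_scheme"
    and M :: "('a,'m) module" and L :: "('s,'l) module"
  assumes R: "ring R" and S: "ring S" and rho: "\<rho> \<in> ring_hom R S" and iota: "\<iota> \<in> ring_hom S R"
    and ri: "\<forall>s\<in>carrier S. \<rho> (\<iota> s) = s"
    and rp: "retractive_pair R S \<rho> \<iota> M L ap am"
    and rs: "res n R M (\<lambda>i. fmod R (k i)) D0 D"
  shows "\<exists>(P :: ('a, nat \<Rightarrow> 'a) module) (F :: ('s, nat \<Rightarrow> 's) module) bp bm d0 e0.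
     fg_free R P \<and> fg_free S F \<and> retractive_pair R S \<rho> \<iota> P F bp bm \<and>
     rp_mapping R S P F bp bm M L ap am d0 e0 \<and> d0 ` carrier P = carrier M \<and> e0 ` carrier F = carrier L \<and>
     (n \<ge> 1 \<longrightarrow> (\<exists>k' D0' D'. res (n - 1) R (P\<lparr>carrier := mod_kernel P M d0\<rparr>) (\<lambda>i. fmod R (k' i)) D0' D'))"
proof -
  interpret R: ring R by fact
  interpret S: ring S by fact
  from rp have lmM: "left_module R M" and lmL: "left_module S L"
    and aph: "ap \<in> lmod_hom R M (restrict_scalars \<rho> L)" and amh: "am \<in> lmod_hom S L (restrict_scalars \<iota> M)"
    and retr: "\<forall>y\<in>carrier L. ap (am y) = y"
    unfolding retractive_pair_def by auto
  interpret M: left_module R M by fact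
  interpret L: left_module S L by fact
  note AP = rs_homD[OF aph] and AM = rs_homD[OF amh]
  define K where "K = k 0"
  from rs have D0h: "D0 \<in> lmod_hom R (fmod R K) M" and D0s: "D0 ` carrier (fmod R K) = carrier M"
    and Dh: "\<forall>i\<in>{1..n}. D i \<in> lmod_hom R (fmod R (k i)) (fmod R (k (i - 1)))"
    and e1: "n \<ge> 1 \<longrightarrow> D 1 ` carrier (fmod R (k 1)) = mod_kernel (fmod R K) M D0"
    and e2: "\<forall>i. 1 \<le> i \<and> i < n \<longrightarrow> D (Suc i) ` carrier (fmod R (k (Suc i))) = mod_kernel (fmod R (k i)) (fmod R (k (i - 1))) (D i)"
    unfolding res_def K_def by auto
  have lmA: "left_module R (fmod R N)" for N by (rule fmod_left_module[OF R])
  have lmB: "left_module S (fmod S N)" for N by (rule fmod_left_module[OF S])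
  interpret A: left_module R "fmod R K" by (rule lmA)
  have rhoc: "\<rho> \<in> carrier R \<rightarrow> carrier S" using ring_hom_closed[OF rho] by blast
  have iotac: "\<iota> \<in> carrier S \<rightarrow> carrier R" using ring_hom_closed[OF iota] by blast
  note D0H = lmod_homD[OF D0h]
  define w where "w j = D0 (unitv R j)" for j
  have wM: "\<forall>j<K. w j \<in> carrier M" using D0H(1) unitv_mem[OF R] by (simp add: w_def)
  define nv where "nv j = am (ap (w j))" for j
  have apw: "\<forall>j<K. ap (w j) \<in> carrier L" using wM AP(1) by blast
  have nvM: "\<forall>j<K. nv j \<in> carrier M" using apw AM(1) by (simp add: nv_def)
  define N where "N = lin M nv K"
  define \<delta> where "\<delta> = lin L (\<lambda>j. ap (w j)) K"
  have Nh: "N \<in> lmod_hom R (fmod R K) M" unfolding N_def by (rule lin_hom[OF lmM nvM])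
  have \<delta>h: "\<delta> \<in> lmod_hom S (fmod S K) L" unfolding \<delta>_def by (rule lin_hom[OF lmL apw])
  note \<delta>H = lmod_homD[OF \<delta>h]
  have "\<forall>j. \<exists>x. j < K \<longrightarrow> x \<in> carrier (fmod R K) \<and> D0 x = nv j"
    using nvM D0s by (metis imageE)
  then obtain s where s: "\<forall>j. j < K \<longrightarrow> s j \<in> carrier (fmod R K) \<and> D0 (s j) = nv j"
    by metis
  have sc: "\<forall>j<K. s j \<in> carrier (fmod R K)" using s by blast
  define \<sigma> where "\<sigma> = lin (fmod R K) s K"
  have \<sigma>h: "\<sigma> \<in> lmod_hom R (fmod R K) (fmod R K)" unfolding \<sigma>_def by (rule lin_hom[OF lmA sc])
  note \<sigma>H = lmod_homD[OF \<sigma>h]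
  have D0\<sigma>: "D0 (\<sigma> z) = N z" if z: "z \<in> carrier (fmod R K)" for z
  proof -
    have "D0 (\<sigma> z) = lin M (\<lambda>j. D0 (s j)) K z" unfolding \<sigma>_def by (rule lin_comp[OF lmA lmM D0h sc z])
    also have "\<dots> = N z" unfolding N_def by (rule lin_cong[OF lmM _ _ z]) (use s D0H(1) sc nvM in auto)
    finally show ?thesis .
  qed
  have rz: "(\<lambda>i. \<rho> (z i)) \<in> carrier (fmod S K)" if "z \<in> carrier (fmod R K)" for z
    by (rule rmap_mem[OF R S rho that])
  have iy: "(\<lambda>i. \<iota> (y i)) \<in> carrier (fmod R K)" if "y \<in> carrier (fmod S K)" for y
    by (rule rmap_mem[OF S R iota that])
  have fa: "ap (D0 z) = \<delta> (\<lambda>i. \<rho> (z i))" if z: "z \<in> carrier (fmod R K)" for z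
  proof -
    have "D0 z = lin M w K z" unfolding w_def by (rule hom_lin[OF lmM D0h z])
    then show ?thesis unfolding \<delta>_def using lin_restrict[OF lmM lmL aph wM z] by simp
  qed
  have fb: "ap (N z) = \<delta> (\<lambda>i. \<rho> (z i))" if z: "z \<in> carrier (fmod R K)" for z
  proof -
    have "ap (N z) = lin L (\<lambda>j. ap (nv j)) K (\<lambda>i. \<rho> (z i))"
      unfolding N_def by (rule lin_restrict[OF lmM lmL aph nvM z])
    also have "\<dots> = \<delta> (\<lambda>i. \<rho> (z i))"
      unfolding \<delta>_def by (rule lin_cong[OF lmL _ _ rz[OF z]]) (use apw retr in \<open>auto simp: nv_def\<close>)
    finally show ?thesis .
  qed
  have fc: "am (\<delta> y) = N (\<lambda>i. \<iota> (y i))" if y: "y \<in> carrier (fmod S K)" for y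
    unfolding \<delta>_def N_def nv_def by (rule lin_restrict[OF lmL lmM amh apw y])
  define P' where "P' = fmod R (K + K)"
  define F where "F = fmod S K"
  define T where "T x = trunc R K x \<oplus>\<^bsub>fmod R K\<^esub> \<sigma> (shift K x)" for x
  have shh: "shift K \<in> lmod_hom R (fmod R (K + K)) (fmod R K)" by (rule shift_hom[OF R])
  have trh: "trunc R K \<in> lmod_hom R (fmod R (K + K)) (fmod R K)" by (rule trunc_hom[OF R])
  have Th: "T \<in> lmod_hom R P' (fmod R K)"
    unfolding T_def P'_def by (rule hom_add[OF lmA trh hom_comp[OF shh \<sigma>h]])
  define d0 where "d0 x = D0 (T x)" for x
  have d0h: "d0 \<in> lmod_hom R P' M" unfolding d0_def by (rule hom_comp[OF Th D0h])
  define bp where "bp x = (\<lambda>i. \<rho> ((trunc R K x \<oplus>\<^bsub>fmod R K\<^esub> shift K x) i))" for x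
  have bph: "bp \<in> lmod_hom R P' (restrict_scalars \<rho> F)"
    unfolding bp_def P'_def F_def
    by (rule hom_comp[OF hom_add[OF lmA trh shh] rmap_hom[OF R S rho]])
  define bm where "bm y = inr R K (\<lambda>i. \<iota> (y i))" for y
  have bmh: "bm \<in> lmod_hom S F (restrict_scalars \<iota> P')"
    unfolding bm_def P'_def F_def
    by (rule hom_comp_rs[OF rmap_hom[OF S R iota] inr_hom[OF R] iotac])
  have bpbm: "bp (bm y) = y" if y: "y \<in> carrier F" for y
  proof -
    have yc: "\<forall>i. y i \<in> carrier S" using fmod_carrierD[OF S] y by (simp add: F_def)
    show ?thesis
      unfolding bp_def bm_def
      using yc iotac ri by (auto simp: fmod_ops trunc_def inr_def shift_def Pi_def)
  qed
  have rpP: "retractive_pair R S \<rho> \<iota> P' F bp bm"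
    unfolding retractive_pair_def P'_def F_def
    using lmA lmB bph bmh bpbm by (auto simp: P'_def F_def)
  have m1: "ap (d0 x) = \<delta> (bp x)" if x: "x \<in> carrier P'" for x
  proof -
    let ?t = "trunc R K x" and ?s = "shift K x"
    have t: "?t \<in> carrier (fmod R K)" using lmod_homD(1)[OF trh] x by (simp add: P'_def)
    have s': "?s \<in> carrier (fmod R K)" using lmod_homD(1)[OF shh] x by (simp add: P'_def)
    have ss: "\<sigma> ?s \<in> carrier (fmod R K)" using \<sigma>H(1) s' by blast
    note RH = rs_homD[OF rmap_hom[OF R S rho, of K]]
    have "ap (d0 x) = \<delta> (\<lambda>i. \<rho> ((?t \<oplus>\<^bsub>fmod R K\<^esub> \<sigma> ?s) i))"
      unfolding d0_def T_def by (rule fa) (use t ss in \<open>simp add: A.M.a_closed\<close>)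
    also have "\<dots> = \<delta> ((\<lambda>i. \<rho> (?t i)) \<oplus>\<^bsub>fmod S K\<^esub> (\<lambda>i. \<rho> (\<sigma> ?s i)))"
      using RH(2)[OF t ss] by simp
    also have "\<dots> = \<delta> (\<lambda>i. \<rho> (?t i)) \<oplus>\<^bsub>L\<^esub> \<delta> (\<lambda>i. \<rho> (\<sigma> ?s i))"
      by (rule \<delta>H(2)[OF rz[OF t] rz[OF ss]])
    also have "\<delta> (\<lambda>i. \<rho> (\<sigma> ?s i)) = \<delta> (\<lambda>i. \<rho> (?s i))"
      using fa[OF ss] D0\<sigma>[OF s'] fb[OF s'] by simp
    also have "\<delta> (\<lambda>i. \<rho> (?t i)) \<oplus>\<^bsub>L\<^esub> \<delta> (\<lambda>i. \<rho> (?s i)) = \<delta> ((\<lambda>i. \<rho> (?t i)) \<oplus>\<^bsub>fmod S K\<^esub> (\<lambda>i. \<rho> (?s i)))"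
      by (rule \<delta>H(2)[OF rz[OF t] rz[OF s'], symmetric])
    also have "\<dots> = \<delta> (bp x)"
      using RH(2)[OF t s'] by (simp add: bp_def)
    finally show ?thesis .
  qed
  have m2: "d0 (bm y) = am (\<delta> y)" if y: "y \<in> carrier F" for y
  proof -
    let ?z = "\<lambda>i. \<iota> (y i)"
    have z: "?z \<in> carrier (fmod R K)" using iy y by (simp add: F_def)
    have "T (bm y) = \<sigma> ?z"
      unfolding T_def bm_def trunc_inr[OF R, of K _ K] shift_inr[OF R]
      using fmod_zero_add(1)[OF R] fmod_carrierD[OF R \<sigma>H(1)[OF z]] by simp
    then show ?thesis using D0\<sigma>[OF z] fc y by (simp add: d0_def F_def)
  qed
  have mp: "rp_mapping R S P' F bp bm M L ap am d0 \<delta>"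
    unfolding rp_mapping_def using d0h \<delta>h m1 m2 by (simp add: F_def)
  have d0s: "d0 ` carrier P' = carrier M"
  proof
    show "d0 ` carrier P' \<subseteq> carrier M" using lmod_homD(1)[OF d0h] by blast
  next
    show "carrier M \<subseteq> d0 ` carrier P'"
    proof
      fix m assume "m \<in> carrier M"
      then obtain z where z: "z \<in> carrier (fmod R K)" "m = D0 z" using D0s by blast
      have zP: "z \<in> carrier P'" using fmod_widen[OF R z(1)] by (simp add: P'_def)
      have "shift K z = \<zero>\<^bsub>fmod R K\<^esub>" by (rule shift_zero[OF R z(1)])
      moreover have "\<sigma> \<zero>\<^bsub>fmod R K\<^esub> = \<zero>\<^bsub>fmod R K\<^esub>"
        by (rule addhom_zero[OF left_module.axioms(2)[OF lmA] left_module.axioms(2)[OF lmA] lmod_hom_addhom[OF \<sigma>h]])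
      ultimately have "T z = z"
        unfolding T_def trunc_id[OF R z(1)] using fmod_zero_add(2)[OF R fmod_carrierD[OF R z(1)]] by simp
      then have "d0 z = m" using z by (simp add: d0_def)
      then show "m \<in> d0 ` carrier P'" using zP by (metis imageI)
    qed
  qed
  have \<delta>s: "\<delta> ` carrier F = carrier L"
  proof
    show "\<delta> ` carrier F \<subseteq> carrier L" using \<delta>H(1) by (auto simp: F_def)
  next
    show "carrier L \<subseteq> \<delta> ` carrier F"
    proof
      fix l assume l: "l \<in> carrier L"
      then obtain z where z: "z \<in> carrier (fmod R K)" "am l = D0 z" using D0s AM(1) by (metis imageE)
      have "l = \<delta> (\<lambda>i. \<rho> (z i))" using retr l fa[OF z(1)] z(2) by metis
      then show "l \<in> \<delta> ` carrier F" using rz[OF z(1)] by (auto simp: F_def)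
    qed
  qed
  have kern: "n \<ge> 1 \<longrightarrow> (\<exists>k' D0' D'. res (n - 1) R (P'\<lparr>carrier := mod_kernel P' M d0\<rparr>) (\<lambda>i. fmod R (k' i)) D0' D')"
  proof
    assume n1: "1 \<le> n"
    define K1 where "K1 = k 1"
    have "D 1 \<in> lmod_hom R (fmod R (k 1)) (fmod R (k (1 - 1)))" using Dh n1 by (meson atLeastAtMost_iff le_refl)
    then have D1h: "D 1 \<in> lmod_hom R (fmod R K1) (fmod R K)" by (simp add: K1_def K_def)
    have e1': "D 1 ` carrier (fmod R K1) = mod_kernel (fmod R K) M D0" using e1 n1 by (simp add: K1_def)
    note D1H = lmod_homD[OF D1h]
    define E0 where "E0 y = (D 1 (trunc R K1 y) \<oplus>\<^bsub>fmod R K\<^esub> neg R (\<sigma> (shift K1 y))) \<oplus>\<^bsub>fmod R K\<^esub> inr R K (shift K1 y)" for y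
    have tr1: "trunc R K1 \<in> lmod_hom R (fmod R (K1 + K)) (fmod R K1)" by (rule trunc_hom[OF R])
    have sh1: "shift K1 \<in> lmod_hom R (fmod R (K1 + K)) (fmod R K)" by (rule shift_hom[OF R])
    have h1: "(\<lambda>y. D 1 (trunc R K1 y)) \<in> lmod_hom R (fmod R (K1 + K)) (fmod R (K + K))"
      by (rule hom_widen[OF R hom_comp[OF tr1 D1h]]) simp
    have h2: "(\<lambda>y. neg R (\<sigma> (shift K1 y))) \<in> lmod_hom R (fmod R (K1 + K)) (fmod R (K + K))"
      by (rule hom_widen[OF R hom_comp[OF hom_comp[OF sh1 \<sigma>h] neg_hom[OF R]]]) simp
    have h3: "(\<lambda>y. inr R K (shift K1 y)) \<in> lmod_hom R (fmod R (K1 + K)) (fmod R (K + K))"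
      by (rule hom_comp[OF sh1 inr_hom[OF R]])
    have E0h: "E0 \<in> lmod_hom R (fmod R (K1 + K)) P'"
    proof -
      have "E0 = (\<lambda>y. (D 1 (trunc R K1 y) \<oplus>\<^bsub>fmod R (K + K)\<^esub> neg R (\<sigma> (shift K1 y))) \<oplus>\<^bsub>fmod R (K + K)\<^esub> inr R K (shift K1 y))"
        by (intro ext) (simp add: E0_def fmod_ops)
      then show ?thesis unfolding P'_def using hom_add[OF lmA hom_add[OF lmA h1 h2] h3] by simp
    qed
    have calc: "T (E0 y) = D 1 (trunc R K1 y)" "E0 y = (D 1 (trunc R K1 y) \<oplus>\<^bsub>fmod R K\<^esub> neg R (\<sigma> (shift K1 y))) \<oplus>\<^bsub>fmod R K\<^esub> inr R K (shift K1 y)"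
      if y: "y \<in> carrier (fmod R (K1 + K))" for y
    proof -
      let ?t = "trunc R K1 y" and ?s = "shift K1 y"
      have t: "?t \<in> carrier (fmod R K1)" using lmod_homD(1)[OF tr1 y] .
      have s': "?s \<in> carrier (fmod R K)" using lmod_homD(1)[OF sh1 y] .
      have d1t: "D 1 ?t \<in> carrier (fmod R K)" using D1H(1)[OF t] .
      have ns: "neg R (\<sigma> ?s) \<in> carrier (fmod R K)" using lmod_homD(1)[OF neg_hom[OF R]] \<sigma>H(1)[OF s'] by blast
      have u: "D 1 ?t \<oplus>\<^bsub>fmod R K\<^esub> neg R (\<sigma> ?s) \<in> carrier (fmod R K)"
        by (rule fmod_add_closed[OF R d1t ns])
      show "E0 y = (D 1 ?t \<oplus>\<^bsub>fmod R K\<^esub> neg R (\<sigma> ?s)) \<oplus>\<^bsub>fmod R K\<^esub> inr R K ?s" by (simp add: E0_def)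
      have "T (E0 y) = (D 1 ?t \<oplus>\<^bsub>fmod R K\<^esub> neg R (\<sigma> ?s)) \<oplus>\<^bsub>fmod R K\<^esub> \<sigma> ?s"
        unfolding T_def E0_def trunc_sum[OF R u s'] shift_sum[OF R u s'] ..
      also have "\<dots> = D 1 ?t"
        by (rule fmod_cancel2[OF R fmod_carrierD[OF R d1t] fmod_carrierD[OF R \<sigma>H(1)[OF s']]])
      finally show "T (E0 y) = D 1 ?t" .
    qed
    have E0k: "E0 y \<in> mod_kernel P' M d0" if y: "y \<in> carrier (fmod R (K1 + K))" for y
    proof -
      have t: "trunc R K1 y \<in> carrier (fmod R K1)" using lmod_homD(1)[OF tr1 y] .
      have "D 1 (trunc R K1 y) \<in> mod_kernel (fmod R K) M D0" using e1' t by blast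
      then have "d0 (E0 y) = \<zero>\<^bsub>M\<^esub>" using calc(1)[OF y] by (simp add: d0_def mod_kernel_def)
      then show ?thesis using lmod_homD(1)[OF E0h y] by (simp add: mod_kernel_def)
    qed
    have E0h': "E0 \<in> lmod_hom R (fmod R (K1 + K)) (P'\<lparr>carrier := mod_kernel P' M d0\<rparr>)"
      by (rule hom_into_sub[OF E0h]) (use E0k in blast)
    have E0s: "E0 ` carrier (fmod R (K1 + K)) = mod_kernel P' M d0"
    proof
      show "E0 ` carrier (fmod R (K1 + K)) \<subseteq> mod_kernel P' M d0" using E0k by blast
    next
      show "mod_kernel P' M d0 \<subseteq> E0 ` carrier (fmod R (K1 + K))"
      proof
        fix x assume x: "x \<in> mod_kernel P' M d0"
        then have xP0: "x \<in> carrier P'" and dx0: "d0 x = \<zero>\<^bsub>M\<^esub>"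
          unfolding mod_kernel_def by auto
        from xP0 have xP: "x \<in> carrier (fmod R (K + K))" by (simp only: P'_def)
        from dx0 have dx: "D0 (T x) = \<zero>\<^bsub>M\<^esub>" by (simp only: d0_def)
        have Tx: "T x \<in> carrier (fmod R K)" using lmod_homD(1)[OF Th xP0] .
        then have "T x \<in> mod_kernel (fmod R K) M D0" using dx unfolding mod_kernel_def by blast
        then have "T x \<in> D 1 ` carrier (fmod R K1)" unfolding e1' .
        then obtain t where t: "t \<in> carrier (fmod R K1)" "D 1 t = T x" by (metis imageE)
        let ?sx = "shift K x"
        have sx: "?sx \<in> carrier (fmod R K)" using lmod_homD(1)[OF shh xP] .
        have tx: "trunc R K x \<in> carrier (fmod R K)" using lmod_homD(1)[OF trh xP] .
        define y where "y = t \<oplus>\<^bsub>fmod R K\<^esub> inr R K1 ?sx"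
        have y: "y \<in> carrier (fmod R (K1 + K))" unfolding y_def
          by (rule fmod_add_closed[OF R fmod_widen[OF R t(1)] lmod_homD(1)[OF inr_hom[OF R] sx]]) simp
        have ty: "trunc R K1 y = t" unfolding y_def by (rule trunc_sum[OF R t(1) sx])
        have sy: "shift K1 y = ?sx" unfolding y_def by (rule shift_sum[OF R t(1) sx])
        have "E0 y = (D 1 t \<oplus>\<^bsub>fmod R K\<^esub> neg R (\<sigma> ?sx)) \<oplus>\<^bsub>fmod R K\<^esub> inr R K ?sx"
          using calc(2)[OF y] unfolding ty sy .
        also have "\<dots> = ((trunc R K x \<oplus>\<^bsub>fmod R K\<^esub> \<sigma> ?sx) \<oplus>\<^bsub>fmod R K\<^esub> neg R (\<sigma> ?sx)) \<oplus>\<^bsub>fmod R K\<^esub> inr R K ?sx"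
          unfolding t(2) T_def ..
        also have "\<dots> = trunc R K x \<oplus>\<^bsub>fmod R K\<^esub> inr R K ?sx"
          by (rule fmod_cancel1[OF R fmod_carrierD[OF R tx] fmod_carrierD[OF R \<sigma>H(1)[OF sx]]
                fmod_carrierD[OF R lmod_homD(1)[OF inr_hom[OF R] sx]]])
        also have "\<dots> = x" by (rule decomp[OF R xP])
        finally have "E0 y = x" .
        show "x \<in> E0 ` carrier (fmod R (K1 + K))" by (rule image_eqI[of x E0 y, OF sym[OF \<open>E0 y = x\<close>] y])
      qed
    qed
    define k' where "k' i = (if i = 0 then K1 + K else k (Suc i))" for i
    have "res (n - 1) R (P'\<lparr>carrier := mod_kernel P' M d0\<rparr>) (\<lambda>i. fmod R (k' i)) E0 (\<lambda>i. D (Suc i))"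
      unfolding res_def
    proof (intro conjI ballI allI impI)
      show "E0 \<in> lmod_hom R (fmod R (k' 0)) (P'\<lparr>carrier := mod_kernel P' M d0\<rparr>)"
        using E0h' by (simp add: k'_def)
      show "E0 ` carrier (fmod R (k' 0)) = carrier (P'\<lparr>carrier := mod_kernel P' M d0\<rparr>)"
        using E0s by (simp add: k'_def)
    next
      fix i assume i: "i \<in> {1..n - 1}"
      show "D (Suc i) \<in> lmod_hom R (fmod R (k' i)) (fmod R (k' (i - 1)))"
      proof (cases "i = 1")
        case True
        have "2 \<in> {1..n}" using i by auto
        from Dh[rule_format, OF this] have "D 2 \<in> lmod_hom R (fmod R (k 2)) (fmod R (k 1))" by simp
        then have "D 2 \<in> lmod_hom R (fmod R (k 2)) (fmod R (K1 + K))"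
          by (rule hom_widen[OF R]) (simp add: K1_def)
        then show ?thesis using True by (simp add: k'_def numeral_2_eq_2)
      next
        case False
        have "Suc i \<in> {1..n}" using i by auto
        from Dh[rule_format, OF this] have "D (Suc i) \<in> lmod_hom R (fmod R (k (Suc i))) (fmod R (k (Suc i - 1)))" .
        then show ?thesis using False i by (simp add: k'_def)
      qed
    next
      assume n2: "1 \<le> n - 1"
      have "1 \<le> (1::nat) \<and> 1 < n" using n2 by auto
      from e2[rule_format, OF this]
      have ee: "D (Suc 1) ` carrier (fmod R (k' 1)) = mod_kernel (fmod R K1) (fmod R K) (D 1)"
        by (simp add: k'_def K1_def K_def)
      have z0: "\<sigma> \<zero>\<^bsub>fmod R K\<^esub> = \<zero>\<^bsub>fmod R K\<^esub>"
        by (rule addhom_zero[OF left_module.axioms(2)[OF lmA] left_module.axioms(2)[OF lmA] lmod_hom_addhom[OF \<sigma>h]])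
      have zc: "\<forall>i. \<zero>\<^bsub>fmod R K\<^esub> i \<in> carrier R" by (simp add: fmod_ops)
      have kk: "mod_kernel (fmod R (K1 + K)) (P'\<lparr>carrier := mod_kernel P' M d0\<rparr>) E0 = mod_kernel (fmod R K1) (fmod R K) (D 1)"
      proof
        show "mod_kernel (fmod R (K1 + K)) (P'\<lparr>carrier := mod_kernel P' M d0\<rparr>) E0 \<subseteq> mod_kernel (fmod R K1) (fmod R K) (D 1)"
        proof
          fix y assume "y \<in> mod_kernel (fmod R (K1 + K)) (P'\<lparr>carrier := mod_kernel P' M d0\<rparr>) E0"
          then have y: "y \<in> carrier (fmod R (K1 + K))" and Ey: "E0 y = \<zero>\<^bsub>fmod R K\<^esub>"
            unfolding mod_kernel_def by (auto simp: P'_def fmod_ops)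
          let ?t = "trunc R K1 y" and ?s = "shift K1 y"
          have t: "?t \<in> carrier (fmod R K1)" using lmod_homD(1)[OF tr1 y] .
          have s': "?s \<in> carrier (fmod R K)" using lmod_homD(1)[OF sh1 y] .
          have d1t: "D 1 ?t \<in> carrier (fmod R K)" using D1H(1)[OF t] .
          have ns: "neg R (\<sigma> ?s) \<in> carrier (fmod R K)" using lmod_homD(1)[OF neg_hom[OF R]] \<sigma>H(1)[OF s'] by blast
          have u: "D 1 ?t \<oplus>\<^bsub>fmod R K\<^esub> neg R (\<sigma> ?s) \<in> carrier (fmod R K)"
            by (rule fmod_add_closed[OF R d1t ns])
          have "?s = shift K (E0 y)" unfolding calc(2)[OF y] shift_sum[OF R u s'] ..
          also have "\<dots> = \<zero>\<^bsub>fmod R K\<^esub>" unfolding Ey by (simp add: shift_def fmod_ops)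
          finally have s0: "?s = \<zero>\<^bsub>fmod R K\<^esub>" .
          have "E0 y = (D 1 ?t \<oplus>\<^bsub>fmod R K\<^esub> \<zero>\<^bsub>fmod R K\<^esub>) \<oplus>\<^bsub>fmod R K\<^esub> \<zero>\<^bsub>fmod R K\<^esub>"
            unfolding calc(2)[OF y] s0 z0 neg_zero[OF R, of K K] inr_zero[OF R, of K K K] ..
          also have "\<dots> = D 1 ?t" using fmod_zero_add(2)[OF R fmod_carrierD[OF R d1t]] by simp
          finally have D1t: "D 1 ?t = \<zero>\<^bsub>fmod R K\<^esub>" using Ey by simp
          have "y = ?t \<oplus>\<^bsub>fmod R K\<^esub> inr R K1 ?s" using decomp[OF R y] by simp
          also have "\<dots> = ?t" unfolding s0 inr_zero[OF R, of K1 K K] using fmod_zero_add(2)[OF R fmod_carrierD[OF R t]] by simp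
          finally have yt: "y = ?t" .
          show "y \<in> mod_kernel (fmod R K1) (fmod R K) (D 1)"
            using t D1t yt by (simp add: mod_kernel_def)
        qed
      next
        show "mod_kernel (fmod R K1) (fmod R K) (D 1) \<subseteq> mod_kernel (fmod R (K1 + K)) (P'\<lparr>carrier := mod_kernel P' M d0\<rparr>) E0"
        proof
          fix y assume "y \<in> mod_kernel (fmod R K1) (fmod R K) (D 1)"
          then have y: "y \<in> carrier (fmod R K1)" and Dy: "D 1 y = \<zero>\<^bsub>fmod R K\<^esub>"
            unfolding mod_kernel_def by auto
          have y': "y \<in> carrier (fmod R (K1 + K))" by (rule fmod_widen[OF R y]) simp
          have "E0 y = (\<zero>\<^bsub>fmod R K\<^esub> \<oplus>\<^bsub>fmod R K\<^esub> \<zero>\<^bsub>fmod R K\<^esub>) \<oplus>\<^bsub>fmod R K\<^esub> \<zero>\<^bsub>fmod R K\<^esub>"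
            unfolding E0_def trunc_id[OF R y] shift_zero[OF R y, of K] Dy z0 neg_zero[OF R, of K K] inr_zero[OF R, of K K K] ..
          also have "\<dots> = \<zero>\<^bsub>fmod R K\<^esub>" using fmod_zero_add(2)[OF R zc] by simp
          finally have "E0 y = \<zero>\<^bsub>fmod R K\<^esub>" .
          then show "y \<in> mod_kernel (fmod R (K1 + K)) (P'\<lparr>carrier := mod_kernel P' M d0\<rparr>) E0"
            using y' by (simp add: mod_kernel_def P'_def fmod_ops)
        qed
      qed
      show "D (Suc 1) ` carrier (fmod R (k' 1)) = mod_kernel (fmod R (k' 0)) (P'\<lparr>carrier := mod_kernel P' M d0\<rparr>) E0"
        using ee kk by (simp add: k'_def)
    next
      fix i assume i: "1 \<le> i \<and> i < n - 1"
      have "D (Suc (Suc i)) ` carrier (fmod R (k (Suc (Suc i)))) = mod_kernel (fmod R (k (Suc i))) (fmod R (k (Suc i - 1))) (D (Suc i))"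
      proof -
        have "1 \<le> Suc i \<and> Suc i < n" using i by auto
        from e2[rule_format, OF this] show ?thesis .
      qed
      then show "D (Suc (Suc i)) ` carrier (fmod R (k' (Suc i))) = mod_kernel (fmod R (k' i)) (fmod R (k' (i - 1))) (D (Suc i))"
        using i by (simp add: k'_def mod_kernel_def fmod_ops)
    qed
    then show "\<exists>k' D0' D'. res (n - 1) R (P'\<lparr>carrier := mod_kernel P' M d0\<rparr>) (\<lambda>i. fmod R (k' i)) D0' D'" by blast
  qed
  show ?thesis
    apply (rule exI[of _ P'], rule exI[of _ F], rule exI[of _ bp], rule exI[of _ bm], rule exI[of _ d0], rule exI[of _ \<delta>])
    using fmod_fg_free[OF R] fmod_fg_free[OF S] rpP mp d0s \<delta>s kern by (simp add: P'_def F_def)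
qed

definition concl ::
  "nat \<Rightarrow> ('a, 'c) ring_scheme \<Rightarrow> ('s, 'e) ring_scheme \<Rightarrow> ('a \<Rightarrow> 's) \<Rightarrow> ('s \<Rightarrow> 'a) \<Rightarrow>
   ('a, 'm) module \<Rightarrow> ('s, 'l) module \<Rightarrow> ('m \<Rightarrow> 'l) \<Rightarrow> ('l \<Rightarrow> 'm) \<Rightarrow> bool" where
  "concl n R S \<rho> \<iota> M L ap am \<longleftrightarrow>
   (\<exists>(P :: nat \<Rightarrow> ('a, nat \<Rightarrow> 'a) module) (F :: nat \<Rightarrow> ('s, nat \<Rightarrow> 's) module)
            bp bm d0 e0 d e.
     (\<forall>i\<le>n. fg_free R (P i) \<and> fg_free S (F i) \<and>
             retractive_pair R S \<rho> \<iota> (P i) (F i) (bp i) (bm i)) \<and>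
     rp_mapping R S (P 0) (F 0) (bp 0) (bm 0) M L ap am d0 e0 \<and>
     (\<forall>i\<in>{1..n}. rp_mapping R S (P i) (F i) (bp i) (bm i)
                    (P (i - 1)) (F (i - 1)) (bp (i - 1)) (bm (i - 1)) (d i) (e i)) \<and>
     d0 ` carrier (P 0) = carrier M \<and> e0 ` carrier (F 0) = carrier L \<and>
     (1 \<le> n \<longrightarrow> d 1 ` carrier (P 1) = mod_kernel (P 0) M d0 \<and>
                  e 1 ` carrier (F 1) = mod_kernel (F 0) L e0) \<and>
     (\<forall>i. 1 \<le> i \<and> i < n \<longrightarrow>
        d (Suc i) ` carrier (P (Suc i)) = mod_kernel (P i) (P (i - 1)) (d i) \<and>
        e (Suc i) ` carrier (F (Suc i)) = mod_kernel (F i) (F (i - 1)) (e i)))"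

lemma assemble0:
  fixes P' :: "('a, nat \<Rightarrow> 'a) module" and F' :: "('s, nat \<Rightarrow> 's) module"
  assumes "fg_free R P'" "fg_free S F'" "retractive_pair R S \<rho> \<iota> P' F' bp' bm'"
    "rp_mapping R S P' F' bp' bm' M L ap am d0' e0'" "d0' ` carrier P' = carrier M" "e0' ` carrier F' = carrier L"
  shows "concl 0 R S \<rho> \<iota> M L ap am"
  unfolding concl_def
  apply (rule exI[of _ "\<lambda>_. P'"], rule exI[of _ "\<lambda>_. F'"], rule exI[of _ "\<lambda>_. bp'"], rule exI[of _ "\<lambda>_. bm'"])
  apply (rule exI[of _ d0'], rule exI[of _ e0'], rule exI[of _ "\<lambda>_. id"], rule exI[of _ "\<lambda>_. id"])
  using assms by auto

lemma rp_mapping_super: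
  assumes "rp_mapping R S P F bp bm (M\<lparr>carrier := A\<rparr>) (L\<lparr>carrier := B\<rparr>) ap am \<phi> \<psi>" "A \<subseteq> carrier M" "B \<subseteq> carrier L"
  shows "rp_mapping R S P F bp bm M L ap am \<phi> \<psi>"
proof -
  from assms(1) have a: "\<phi> \<in> lmod_hom R P (M\<lparr>carrier := A\<rparr>)" "\<psi> \<in> lmod_hom S F (L\<lparr>carrier := B\<rparr>)"
    "\<forall>x\<in>carrier P. ap (\<phi> x) = \<psi> (bp x)" "\<forall>y\<in>carrier F. \<phi> (bm y) = am (\<psi> y)"
    unfolding rp_mapping_def by auto
  show ?thesis unfolding rp_mapping_def
    using hom_to_super[OF a(1) assms(2)] hom_to_super[OF a(2) assms(3)] a(3,4) by blast
qed

lemma assemble_suc: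
  fixes P' :: "('a, nat \<Rightarrow> 'a) module" and F' :: "('s, nat \<Rightarrow> 's) module"
  assumes "fg_free R P'" "fg_free S F'" "retractive_pair R S \<rho> \<iota> P' F' bp' bm'"
    "rp_mapping R S P' F' bp' bm' M L ap am d0' e0'" "d0' ` carrier P' = carrier M" "e0' ` carrier F' = carrier L"
    "concl m R S \<rho> \<iota> (P'\<lparr>carrier := mod_kernel P' M d0'\<rparr>) (F'\<lparr>carrier := mod_kernel F' L e0'\<rparr>) bp' bm'"
  shows "concl (Suc m) R S \<rho> \<iota> M L ap am"
proof -
  let ?KM = "P'\<lparr>carrier := mod_kernel P' M d0'\<rparr>" and ?KL = "F'\<lparr>carrier := mod_kernel F' L e0'\<rparr>"
  obtain P1 :: "nat \<Rightarrow> ('a, nat \<Rightarrow> 'a) module" and F1 :: "nat \<Rightarrow> ('s, nat \<Rightarrow> 's) module"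
    and bp1 bm1 d01 e01 d1 e1 where
    h1: "\<forall>i\<le>m. fg_free R (P1 i) \<and> fg_free S (F1 i) \<and> retractive_pair R S \<rho> \<iota> (P1 i) (F1 i) (bp1 i) (bm1 i)"
    and h2: "rp_mapping R S (P1 0) (F1 0) (bp1 0) (bm1 0) ?KM ?KL bp' bm' d01 e01"
    and h3: "\<forall>i\<in>{1..m}. rp_mapping R S (P1 i) (F1 i) (bp1 i) (bm1 i)
                    (P1 (i - 1)) (F1 (i - 1)) (bp1 (i - 1)) (bm1 (i - 1)) (d1 i) (e1 i)"
    and h40: "d01 ` carrier (P1 0) = carrier ?KM" "e01 ` carrier (F1 0) = carrier ?KL"
    and h5: "1 \<le> m \<longrightarrow> d1 1 ` carrier (P1 1) = mod_kernel (P1 0) ?KM d01 \<and>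
                  e1 1 ` carrier (F1 1) = mod_kernel (F1 0) ?KL e01"
    and h6: "\<forall>i. 1 \<le> i \<and> i < m \<longrightarrow>
        d1 (Suc i) ` carrier (P1 (Suc i)) = mod_kernel (P1 i) (P1 (i - 1)) (d1 i) \<and>
        e1 (Suc i) ` carrier (F1 (Suc i)) = mod_kernel (F1 i) (F1 (i - 1)) (e1 i)"
    using assms(7) unfolding concl_def
    apply (elim exE conjE)
    apply (rule that)
    apply assumption+
    done
  have h4: "d01 ` carrier (P1 0) = mod_kernel P' M d0'" "e01 ` carrier (F1 0) = mod_kernel F' L e0'"
    using h40 by simp_all
  define P where "P i = (if i = 0 then P' else P1 (i - 1))" for i
  define F where "F i = (if i = 0 then F' else F1 (i - 1))" for i
  define bp where "bp i = (if i = 0 then bp' else bp1 (i - 1))" for i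
  define bm where "bm i = (if i = 0 then bm' else bm1 (i - 1))" for i
  define d where "d i = (if i = 1 then d01 else d1 (i - 1))" for i
  define e where "e i = (if i = 1 then e01 else e1 (i - 1))" for i
  have mk: "mod_kernel A (B\<lparr>carrier := Z\<rparr>) h = mod_kernel A B h" for A B Z h
    by (simp add: mod_kernel_def)
  show ?thesis unfolding concl_def
  proof (rule exI[of _ P], rule exI[of _ F], rule exI[of _ bp], rule exI[of _ bm], rule exI[of _ d0'],
      rule exI[of _ e0'], rule exI[of _ d], rule exI[of _ e], intro conjI ballI allI impI)
    fix i assume i: "i \<le> Suc m"
    show "fg_free R (P i)" using assms(1) h1 i by (cases i) (auto simp: P_def)
    show "fg_free S (F i)" using assms(2) h1 i by (cases i) (auto simp: F_def)
    show "retractive_pair R S \<rho> \<iota> (P i) (F i) (bp i) (bm i)" using assms(3) h1 i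
      by (cases i) (auto simp: P_def F_def bp_def bm_def)
  next
    show "rp_mapping R S (P 0) (F 0) (bp 0) (bm 0) M L ap am d0' e0'"
      using assms(4) by (simp add: P_def F_def bp_def bm_def)
  next
    fix i assume i: "i \<in> {1..Suc m}"
    show "rp_mapping R S (P i) (F i) (bp i) (bm i) (P (i - 1)) (F (i - 1)) (bp (i - 1)) (bm (i - 1)) (d i) (e i)"
    proof (cases "i = 1")
      case True
      have "rp_mapping R S (P1 0) (F1 0) (bp1 0) (bm1 0) P' F' bp' bm' d01 e01"
        by (rule rp_mapping_super[OF h2]) (auto simp: mod_kernel_def)
      then show ?thesis using True by (simp add: P_def F_def bp_def bm_def d_def e_def)
    next
      case False
      then have "i - 1 \<in> {1..m}" using i by auto
      then have "rp_mapping R S (P1 (i - 1)) (F1 (i - 1)) (bp1 (i - 1)) (bm1 (i - 1))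
                    (P1 (i - 1 - 1)) (F1 (i - 1 - 1)) (bp1 (i - 1 - 1)) (bm1 (i - 1 - 1)) (d1 (i - 1)) (e1 (i - 1))"
        using h3 by blast
      then show ?thesis using False i by (simp add: P_def F_def bp_def bm_def d_def e_def)
    qed
  next
    show "d0' ` carrier (P 0) = carrier M" using assms(5) by (simp add: P_def)
    show "e0' ` carrier (F 0) = carrier L" using assms(6) by (simp add: F_def)
  next
    show "d 1 ` carrier (P 1) = mod_kernel (P 0) M d0'" using h4 by (simp add: P_def d_def)
    show "e 1 ` carrier (F 1) = mod_kernel (F 0) L e0'" using h4 by (simp add: F_def e_def)
  next
    fix i assume i: "1 \<le> i \<and> i < Suc m"
    show "d (Suc i) ` carrier (P (Suc i)) = mod_kernel (P i) (P (i - 1)) (d i)"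
    proof (cases "i = 1")
      case True
      then show ?thesis using h5 i by (simp add: P_def d_def mk)
    next
      case False
      then have "1 \<le> i - 1 \<and> i - 1 < m" using i by auto
      then have "d1 (Suc (i - 1)) ` carrier (P1 (Suc (i - 1))) = mod_kernel (P1 (i - 1)) (P1 (i - 1 - 1)) (d1 (i - 1))"
        using h6 by blast
      then show ?thesis using False i by (simp add: P_def d_def)
    qed
    show "e (Suc i) ` carrier (F (Suc i)) = mod_kernel (F i) (F (i - 1)) (e i)"
    proof (cases "i = 1")
      case True
      then show ?thesis using h5 i by (simp add: F_def e_def mk)
    next
      case False
      then have "1 \<le> i - 1 \<and> i - 1 < m" using i by auto
      then have "e1 (Suc (i - 1)) ` carrier (F1 (Suc (i - 1))) = mod_kernel (F1 (i - 1)) (F1 (i - 1 - 1)) (e1 (i - 1))"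
        using h6 by blast
      then show ?thesis using False i by (simp add: F_def e_def)
    qed
  qed
qed

lemma step_obt:
  fixes R :: "('a,'c) ring_scheme" and S :: "('s,'e) ring_scheme"
    and M :: "('a,'m) module" and L :: "('s,'l) module"
  assumes R: "ring R" and S: "ring S" and rho: "\<rho> \<in> ring_hom R S" and iota: "\<iota> \<in> ring_hom S R"
    and ri: "\<forall>s\<in>carrier S. \<rho> (\<iota> s) = s"
    and rp: "retractive_pair R S \<rho> \<iota> M L ap am"
    and rs: "res n R M (\<lambda>i. fmod R (k i)) D0 D"
  obtains P :: "('a, nat \<Rightarrow> 'a) module" and F :: "('s, nat \<Rightarrow> 's) module" and bp bm d0 e0 where
    "fg_free R P" "fg_free S F" "retractive_pair R S \<rho> \<iota> P F bp bm"
     "rp_mapping R S P F bp bm M L ap am d0 e0" "d0 ` carrier P = carrier M" "e0 ` carrier F = carrier L"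
     "n \<ge> 1 \<longrightarrow> (\<exists>k' D0' D'. res (n - 1) R (P\<lparr>carrier := mod_kernel P M d0\<rparr>) (\<lambda>i. fmod R (k' i)) D0' D')"
  using step[OF R S rho iota ri rp rs]
  apply (elim exE conjE)
  apply (rule that)
  apply assumption+
  done

lemma Q_nat:
  fixes R :: "('a,'c) ring_scheme" and S :: "('s,'e) ring_scheme"
  assumes R: "ring R" and S: "ring S" and rho: "\<rho> \<in> ring_hom R S" and iota: "\<iota> \<in> ring_hom S R"
    and ri: "\<forall>s\<in>carrier S. \<rho> (\<iota> s) = s"
  shows "\<And>(M :: ('a, nat \<Rightarrow> 'a) module) (L :: ('s, nat \<Rightarrow> 's) module) ap am k D0 D.
    retractive_pair R S \<rho> \<iota> M L ap am \<Longrightarrow> res n R M (\<lambda>i. fmod R (k i)) D0 D \<Longrightarrow>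
    concl n R S \<rho> \<iota> M L ap am"
proof (induction n)
  case 0
  obtain P :: "('a, nat \<Rightarrow> 'a) module"
    and F :: "('s, nat \<Rightarrow> 's) module" and bp bm d0 e0 where
    st: "fg_free R P" "fg_free S F" "retractive_pair R S \<rho> \<iota> P F bp bm"
     "rp_mapping R S P F bp bm M L ap am d0 e0" "d0 ` carrier P = carrier M" "e0 ` carrier F = carrier L"
    by (rule step_obt[OF R S rho iota ri 0(1) 0(2)])
  show ?case by (rule assemble0[OF st])
next
  case (Suc m)
  obtain P :: "('a, nat \<Rightarrow> 'a) module"
    and F :: "('s, nat \<Rightarrow> 's) module" and bp bm d0 e0 where
    st: "fg_free R P" "fg_free S F" "retractive_pair R S \<rho> \<iota> P F bp bm"
     "rp_mapping R S P F bp bm M L ap am d0 e0" "d0 ` carrier P = carrier M" "e0 ` carrier F = carrier L"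
    and kr0: "Suc m \<ge> 1 \<longrightarrow> (\<exists>k' D0' D'. res (Suc m - 1) R (P\<lparr>carrier := mod_kernel P M d0\<rparr>) (\<lambda>i. fmod R (k' i)) D0' D')"
    by (rule step_obt[OF R S rho iota ri Suc(2) Suc(3)])
  from kr0 have kr: "\<exists>k' D0' D'. res m R (P\<lparr>carrier := mod_kernel P M d0\<rparr>) (\<lambda>i. fmod R (k' i)) D0' D'"
    by simp
  have kp: "retractive_pair R S \<rho> \<iota> (P\<lparr>carrier := mod_kernel P M d0\<rparr>) (F\<lparr>carrier := mod_kernel F L e0\<rparr>) bp bm"
    by (rule ker_pair[OF st(3) Suc(2) st(4)])
  from kr obtain k' D0' D' where "res m R (P\<lparr>carrier := mod_kernel P M d0\<rparr>) (\<lambda>i. fmod R (k' i)) D0' D'" by blast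
  then have "concl m R S \<rho> \<iota> (P\<lparr>carrier := mod_kernel P M d0\<rparr>) (F\<lparr>carrier := mod_kernel F L e0\<rparr>) bp bm"
    using Suc.IH[OF kp] by blast
  then show ?case by (rule assemble_suc[OF st])
qed

theorem main_concl:
  fixes R :: "('a, 'c) ring_scheme" and S :: "('s, 'e) ring_scheme"
    and M :: "('a, 'm) module" and L :: "('s, 'l) module"
  assumes R: "ring R" and S: "ring S" and rho: "\<rho> \<in> ring_hom R S" and iota: "\<iota> \<in> ring_hom S R"
    and ri: "\<forall>s\<in>carrier S. \<rho> (\<iota> s) = s"
    and rp: "retractive_pair R S \<rho> \<iota> M L ap am"
    and fp: "FP n R M"
  shows "concl n R S \<rho> \<iota> M L ap am"
proof -
  obtain k D0 D where rs: "res n R M (\<lambda>i. fmod R (k i)) D0 D" using normalize[OF fp] by blast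
  obtain P :: "('a, nat \<Rightarrow> 'a) module"
    and F :: "('s, nat \<Rightarrow> 's) module" and bp bm d0 e0 where
    st: "fg_free R P" "fg_free S F" "retractive_pair R S \<rho> \<iota> P F bp bm"
     "rp_mapping R S P F bp bm M L ap am d0 e0" "d0 ` carrier P = carrier M" "e0 ` carrier F = carrier L"
    and kr: "n \<ge> 1 \<longrightarrow> (\<exists>k' D0' D'. res (n - 1) R (P\<lparr>carrier := mod_kernel P M d0\<rparr>) (\<lambda>i. fmod R (k' i)) D0' D')"
    by (rule step_obt[OF R S rho iota ri rp rs])
  show ?thesis
  proof (cases n)
    case 0 then show ?thesis using assemble0[OF st] by simp
  next
    case (Suc m)
    have kp: "retractive_pair R S \<rho> \<iota> (P\<lparr>carrier := mod_kernel P M d0\<rparr>) (F\<lparr>carrier := mod_kernel F L e0\<rparr>) bp bm"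
      by (rule ker_pair[OF st(3) rp st(4)])
    from kr Suc obtain k' D0' D' where "res m R (P\<lparr>carrier := mod_kernel P M d0\<rparr>) (\<lambda>i. fmod R (k' i)) D0' D'" by auto
    then have "concl m R S \<rho> \<iota> (P\<lparr>carrier := mod_kernel P M d0\<rparr>) (F\<lparr>carrier := mod_kernel F L e0\<rparr>) bp bm"
      using Q_nat[OF R S rho iota ri kp] by blast
    then show ?thesis using assemble_suc[OF st] Suc by simp
  qed
qed

lemma concl_FP:
  fixes R :: "('a, 'c) ring_scheme" and S :: "('s, 'e) ring_scheme"
  assumes "concl n R S \<rho> \<iota> M L ap am" "left_module S L"
  shows "FP n S L"
proof -
  obtain P :: "nat \<Rightarrow> ('a, nat \<Rightarrow> 'a) module" and F :: "nat \<Rightarrow> ('s, nat \<Rightarrow> 's) module"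
    and bp bm d0 e0 d e where
    h1: "\<forall>i\<le>n. fg_free R (P i) \<and> fg_free S (F i) \<and> retractive_pair R S \<rho> \<iota> (P i) (F i) (bp i) (bm i)"
    and h2: "rp_mapping R S (P 0) (F 0) (bp 0) (bm 0) M L ap am d0 e0"
    and h3: "\<forall>i\<in>{1..n}. rp_mapping R S (P i) (F i) (bp i) (bm i)
                    (P (i - 1)) (F (i - 1)) (bp (i - 1)) (bm (i - 1)) (d i) (e i)"
    and h4: "d0 ` carrier (P 0) = carrier M" "e0 ` carrier (F 0) = carrier L"
    and h5: "1 \<le> n \<longrightarrow> d 1 ` carrier (P 1) = mod_kernel (P 0) M d0 \<and>
                  e 1 ` carrier (F 1) = mod_kernel (F 0) L e0"
    and h6: "\<forall>i. 1 \<le> i \<and> i < n \<longrightarrow>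
        d (Suc i) ` carrier (P (Suc i)) = mod_kernel (P i) (P (i - 1)) (d i) \<and>
        e (Suc i) ` carrier (F (Suc i)) = mod_kernel (F i) (F (i - 1)) (e i)"
    using assms(1) unfolding concl_def
    apply (elim exE conjE)
    apply (rule that)
    apply assumption+
    done
  have "res n S L F e0 e"
    unfolding res_def
  proof (intro conjI ballI allI impI)
    show "e0 \<in> lmod_hom S (F 0) L" using h2 by (simp add: rp_mapping_def)
    show "e0 ` carrier (F 0) = carrier L" by (rule h4(2))
  next
    fix i assume "i \<in> {1..n}"
    then show "e i \<in> lmod_hom S (F i) (F (i - 1))" using h3 by (simp add: rp_mapping_def)
  next
    assume "1 \<le> n" then show "e 1 ` carrier (F 1) = mod_kernel (F 0) L e0" using h5 by blast
  next
    fix i assume "1 \<le> i \<and> i < n"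
    then show "e (Suc i) ` carrier (F (Suc i)) = mod_kernel (F i) (F (i - 1)) (e i)" using h6 by blast
  qed
  then show ?thesis unfolding FP_res using assms(2) h1 by blast
qed

theorem proposition1:
  fixes R :: "('a, 'c) ring_scheme" and S :: "('s, 'e) ring_scheme"
    and \<rho> :: "'a \<Rightarrow> 's" and \<iota> :: "'s \<Rightarrow> 'a"
    and M :: "('a, 'm) module" and L :: "('s, 'l) module"
    and ap :: "'m \<Rightarrow> 'l" and am :: "'l \<Rightarrow> 'm" and n :: nat
  assumes "ring R" and "ring S"
    and "\<rho> \<in> ring_hom R S" and "\<iota> \<in> ring_hom S R"
    and "\<forall>s\<in>carrier S. \<rho> (\<iota> s) = s"
    and "retractive_pair R S \<rho> \<iota> M L ap am"
    and "FP n R M"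
  shows "\<exists>(P :: nat \<Rightarrow> ('a, nat \<Rightarrow> 'a) module) (F :: nat \<Rightarrow> ('s, nat \<Rightarrow> 's) module)
            bp bm d0 e0 d e.
     (\<forall>i\<le>n. fg_free R (P i) \<and> fg_free S (F i) \<and>
             retractive_pair R S \<rho> \<iota> (P i) (F i) (bp i) (bm i)) \<and>
     rp_mapping R S (P 0) (F 0) (bp 0) (bm 0) M L ap am d0 e0 \<and>
     (\<forall>i\<in>{1..n}. rp_mapping R S (P i) (F i) (bp i) (bm i)
                    (P (i - 1)) (F (i - 1)) (bp (i - 1)) (bm (i - 1)) (d i) (e i)) \<and>
     d0 ` carrier (P 0) = carrier M \<and> e0 ` carrier (F 0) = carrier L \<and>
     (1 \<le> n \<longrightarrow> d 1 ` carrier (P 1) = mod_kernel (P 0) M d0 \<and>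
                  e 1 ` carrier (F 1) = mod_kernel (F 0) L e0) \<and>
     (\<forall>i. 1 \<le> i \<and> i < n \<longrightarrow>
        d (Suc i) ` carrier (P (Suc i)) = mod_kernel (P i) (P (i - 1)) (d i) \<and>
        e (Suc i) ` carrier (F (Suc i)) = mod_kernel (F i) (F (i - 1)) (e i)) \<and>
     FP n S L"
proof -
  have c: "concl n R S \<rho> \<iota> M L ap am" by (rule main_concl[OF assms])
  have lL: "left_module S L" using assms(6) by (simp add: retractive_pair_def)
  have fp: "FP n S L" by (rule concl_FP[OF c lL])
  from c show ?thesis unfolding concl_def
    apply (elim exE conjE)
    apply (intro exI conjI)
    apply assumption+
    apply (rule fp)
    done
qed

end
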